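(* For all $n\ge1$, $$a_{\{0101,0102,0112\}}(n)=a_{\{0101,0102,0120\}}(n)=a_{\{0101,0102,0121\}}(n)=a_{\{0101,0112,0121\}}(n)=a_{\{0101,0120,0121\}}(n)=a_{\{0102,0120,0121\}}(n)=2^n-n.$$
   Context: An ascent in an integer sequence $s_1\cdots s_m$ is an index $j$ with $s_j<s_{j+1}$; $\mathrm{asc}$ denotes the number of ascents. An ascent sequence is a sequence $x_1\cdots x_n$ of nonnegative integers with $x_1=0$ and $x_i\le 1+\mathrm{asc}(x_1\cdots x_{i-1})$ for all $i\ge2$. The reduction $\mathrm{red}(w)$ of an integer sequence $w$ replaces the $i$-th smallest distinct letter of $w$ by $i-1$; a pattern is a reduced sequence. A sequence $x$ contains a pattern $p=p_1\cdots p_k$ if there are indices $i_1<\cdots<i_k$ with $\mathrm{red}(x_{i_1}\cdots x_{i_k})=p$; otherwise $x$ avoids $p$. For a finite set $P$ of patterns, $a_P(n)$ denotes the number of ascent sequences of length $n$ avoiding every pattern in $P$. *)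

theory Defs
  imports Main "HOL-Library.Sublist"
begin

definition asc :: "nat list \<Rightarrow> nat" where
  "asc s = card {j. Suc j < length s \<and> s ! j < s ! Suc j}"

(* ascent sequence: x_1 = 0 and x_i \<le> 1 + asc(x_1..x_(i-1)) for i \<ge> 2;
   we take ascent sequences to be nonempty (length n \<ge> 1 in the statement anyway) *)
definition ascent_seq :: "nat list \<Rightarrow> bool" where
  "ascent_seq x \<longleftrightarrow> x \<noteq> [] \<and> x ! 0 = 0 \<and>
     (\<forall>i. 0 < i \<and> i < length x \<longrightarrow> x ! i \<le> 1 + asc (take i x))"

definition red :: "nat list \<Rightarrow> nat list" where
  "red w = map (\<lambda>a. card {b \<in> set w. b < a}) w"

definition contains :: "nat list \<Rightarrow> nat list \<Rightarrow> bool" where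
  "contains x p \<longleftrightarrow> (\<exists>ys. subseq ys x \<and> red ys = p)"

definition avoids :: "nat list \<Rightarrow> nat list \<Rightarrow> bool" where
  "avoids x p \<longleftrightarrow> \<not> contains x p"

definition a_count :: "nat list set \<Rightarrow> nat \<Rightarrow> nat" where
  "a_count P n = card {x. ascent_seq x \<and> length x = n \<and> (\<forall>p\<in>P. avoids x p)}"

end

theory Submission
  imports Defs
begin

lemma subseq_snoc_iff:
  "subseq zs (x @ [v]) \<longleftrightarrow> subseq zs x \<or> (\<exists>ys. zs = ys @ [v] \<and> subseq ys x)"
proof
  assume "subseq zs (x @ [v])"
  then obtain xs1 xs2 where "zs = xs1 @ xs2" "subseq xs1 x" "subseq xs2 [v]"
    by (auto elim: subseq_appendE)
  moreover have "xs2 = [] \<or> xs2 = [v]" using \<open>subseq xs2 [v]\<close>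
    by (cases xs2) (auto split: if_splits)
  ultimately show "subseq zs x \<or> (\<exists>ys. zs = ys @ [v] \<and> subseq ys x)" by auto
next
  assume "subseq zs x \<or> (\<exists>ys. zs = ys @ [v] \<and> subseq ys x)"
  then show "subseq zs (x @ [v])"
  proof
    assume "subseq zs x" then show ?thesis by (rule subseq_rev_drop_many)
  next
    assume "\<exists>ys. zs = ys @ [v] \<and> subseq ys x"
    then obtain ys where "zs = ys @ [v]" "subseq ys x" by blast
    then show ?thesis by simp
  qed
qed

lemma subseq_snoc_snoc:
  "subseq (ys @ [c]) (x @ [v]) \<longleftrightarrow> subseq (ys @ [c]) x \<or> (c = v \<and> subseq ys x)"
  by (subst subseq_snoc_iff) simp

lemma subseq1_snoc [simp]: "subseq [a] (x @ [v]) \<longleftrightarrow> a \<in> set x \<or> a = v"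
  using subseq_snoc_snoc[of "[]" a x v] by (simp add: subseq_singleton_left)

lemma subseq2_snoc [simp]: "subseq [a,b] (x @ [v]) \<longleftrightarrow> subseq [a,b] x \<or> (b = v \<and> a \<in> set x)"
  using subseq_snoc_snoc[of "[a]" b x v] by (simp add: subseq_singleton_left)

lemma subseq3_snoc [simp]: "subseq [a,b,c] (x @ [v]) \<longleftrightarrow> subseq [a,b,c] x \<or> (c = v \<and> subseq [a,b] x)"
  using subseq_snoc_snoc[of "[a,b]" c x v] by simp

lemma subseq4_snoc [simp]: "subseq [a,b,c,d] (x @ [v]) \<longleftrightarrow> subseq [a,b,c,d] x \<or> (d = v \<and> subseq [a,b,c] x)"
  using subseq_snoc_snoc[of "[a,b,c]" d x v] by simp

lemma red_length [simp]: "length (red w) = length w"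
  by (simp add: red_def)

lemma red_nth: "i < length w \<Longrightarrow> red w ! i = card {b \<in> set w. b < w ! i}"
  by (simp add: red_def)

lemma red_less_iff:
  assumes "i < length w" "j < length w"
  shows "red w ! i < red w ! j \<longleftrightarrow> w ! i < w ! j"
proof
  assume "w ! i < w ! j"
  have s1: "{b \<in> set w. b < w ! i} \<subseteq> {b \<in> set w. b < w ! j}"
    using \<open>w ! i < w ! j\<close> by auto
  have s2: "w ! i \<in> {b \<in> set w. b < w ! j}" using \<open>w ! i < w ! j\<close> assms(1) by simp
  have s3: "w ! i \<notin> {b \<in> set w. b < w ! i}" by simp
  have "{b \<in> set w. b < w ! i} \<subset> {b \<in> set w. b < w ! j}"
    using s1 s2 s3 by blast
  then have "card {b \<in> set w. b < w ! i} < card {b \<in> set w. b < w ! j}"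
    by (rule psubset_card_mono[rotated]) simp
  then show "red w ! i < red w ! j" using assms by (simp add: red_nth)
next
  assume "red w ! i < red w ! j"
  show "w ! i < w ! j"
  proof (rule ccontr)
    assume "\<not> w ! i < w ! j"
    then have "{b \<in> set w. b < w ! j} \<subseteq> {b \<in> set w. b < w ! i}" by auto
    then have "card {b \<in> set w. b < w ! j} \<le> card {b \<in> set w. b < w ! i}"
      by (rule card_mono[rotated]) simp
    then show False using \<open>red w ! i < red w ! j\<close> assms by (simp add: red_nth)
  qed
qed

lemma red_alt: "red w = map (\<lambda>a. card (set (filter (\<lambda>b. b < a) w))) w"
  by (simp add: red_def set_filter)

lemma red_rel:
  assumes "red w = p" "i < length w" "j < length w"
  shows "w ! i < w ! j \<longleftrightarrow> p ! i < p ! j"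
  using red_less_iff[OF assms(2,3)] assms(1) by simp

lemma red4_rel:
  assumes "red [a,b,c,d] = p"
  shows "length p = 4 \<and> (a < b \<longleftrightarrow> p!0 < p!1) \<and> (b < a \<longleftrightarrow> p!1 < p!0)
    \<and> (a < c \<longleftrightarrow> p!0 < p!2) \<and> (c < a \<longleftrightarrow> p!2 < p!0)
    \<and> (a < d \<longleftrightarrow> p!0 < p!3) \<and> (d < a \<longleftrightarrow> p!3 < p!0)
    \<and> (b < c \<longleftrightarrow> p!1 < p!2) \<and> (c < b \<longleftrightarrow> p!2 < p!1)
    \<and> (b < d \<longleftrightarrow> p!1 < p!3) \<and> (d < b \<longleftrightarrow> p!3 < p!1)
    \<and> (c < d \<longleftrightarrow> p!2 < p!3) \<and> (d < c \<longleftrightarrow> p!3 < p!2)"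
proof -
  have L: "length p = 4" using assms red_length[of "[a,b,c,d]"] by simp
  note r = red_rel[OF assms]
  show ?thesis using L r[of 0 1] r[of 1 0] r[of 0 2] r[of 2 0] r[of 0 3] r[of 3 0]
     r[of 1 2] r[of 2 1] r[of 1 3] r[of 3 1] r[of 2 3] r[of 3 2] by simp
qed

definition newocc :: "nat list \<Rightarrow> nat list \<Rightarrow> nat \<Rightarrow> bool" where
  "newocc p x v \<longleftrightarrow> (\<exists>ys. subseq ys x \<and> red (ys @ [v]) = p)"

lemma contains_snoc: "contains (x @ [v]) p \<longleftrightarrow> contains x p \<or> newocc p x v"
  unfolding contains_def newocc_def
  by (subst subseq_snoc_iff) blast

lemma newocc4:
  assumes "length p = 4"
  shows "newocc p x v \<longleftrightarrow> (\<exists>a b c. subseq [a,b,c] x \<and> red [a,b,c,v] = p)"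
proof
  assume "newocc p x v"
  then obtain ys where ys: "subseq ys x" "red (ys @ [v]) = p" by (auto simp: newocc_def)
  then have "length ys = 3" using assms red_length[of "ys @ [v]"] by simp
  then obtain a b c where "ys = [a,b,c]"
    by (cases ys; simp; rename_tac l; case_tac l; simp; rename_tac l; case_tac l; simp)
  then show "\<exists>a b c. subseq [a,b,c] x \<and> red [a,b,c,v] = p" using ys by auto
next
  assume "\<exists>a b c. subseq [a,b,c] x \<and> red [a,b,c,v] = p"
  then show "newocc p x v" unfolding newocc_def by (metis append_Cons append_Nil)
qed

lemma occ0101: "newocc [0,1,0,1] x v \<longleftrightarrow> (\<exists>a. a < v \<and> subseq [a,v,a] x)"
proof
  assume "newocc [0,1,0,1] x v"
  then obtain a b c where h: "subseq [a,b,c] x" "red [a,b,c,v] = [0,1,0,1]"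
    by (auto simp: newocc4)
  from red4_rel[OF h(2)] have "a < b" "a = c" "b = v" by auto
  then show "\<exists>a. a < v \<and> subseq [a,v,a] x" using h(1) by auto
next
  assume "\<exists>a. a < v \<and> subseq [a,v,a] x"
  then obtain a where "a < v" "subseq [a,v,a] x" by auto
  moreover have "red [a,v,a,v] = [0,1,0,1]" using \<open>a < v\<close> by (simp add: red_alt)
  ultimately show "newocc [0,1,0,1] x v" by (auto simp: newocc4)
qed

lemma occ0102: "newocc [0,1,0,2] x v \<longleftrightarrow> (\<exists>a b. a < b \<and> b < v \<and> subseq [a,b,a] x)"
proof
  assume "newocc [0,1,0,2] x v"
  then obtain a b c where h: "subseq [a,b,c] x" "red [a,b,c,v] = [0,1,0,2]"
    by (auto simp: newocc4)
  from red4_rel[OF h(2)] have "a < b" "a = c" "b < v" by auto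
  then show "\<exists>a b. a < b \<and> b < v \<and> subseq [a,b,a] x" using h(1) by auto
next
  assume "\<exists>a b. a < b \<and> b < v \<and> subseq [a,b,a] x"
  then obtain a b where "a < b" "b < v" "subseq [a,b,a] x" by auto
  moreover have "red [a,b,a,v] = [0,1,0,2]" using \<open>a < b\<close> \<open>b < v\<close> by (simp add: red_alt card_insert_if)
  ultimately show "newocc [0,1,0,2] x v" by (auto simp: newocc4)
qed

lemma occ0112: "newocc [0,1,1,2] x v \<longleftrightarrow> (\<exists>a b. a < b \<and> b < v \<and> subseq [a,b,b] x)"
proof
  assume "newocc [0,1,1,2] x v"
  then obtain a b c where h: "subseq [a,b,c] x" "red [a,b,c,v] = [0,1,1,2]"
    by (auto simp: newocc4)
  from red4_rel[OF h(2)] have "a < b" "b = c" "b < v" by auto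
  then show "\<exists>a b. a < b \<and> b < v \<and> subseq [a,b,b] x" using h(1) by auto
next
  assume "\<exists>a b. a < b \<and> b < v \<and> subseq [a,b,b] x"
  then obtain a b where "a < b" "b < v" "subseq [a,b,b] x" by auto
  moreover have "red [a,b,b,v] = [0,1,1,2]" using \<open>a < b\<close> \<open>b < v\<close> by (simp add: red_alt card_insert_if)
  ultimately show "newocc [0,1,1,2] x v" by (auto simp: newocc4)
qed

lemma occ0120: "newocc [0,1,2,0] x v \<longleftrightarrow> (\<exists>b c. v < b \<and> b < c \<and> subseq [v,b,c] x)"
proof
  assume "newocc [0,1,2,0] x v"
  then obtain a b c where h: "subseq [a,b,c] x" "red [a,b,c,v] = [0,1,2,0]"
    by (auto simp: newocc4)
  from red4_rel[OF h(2)] have "a = v" "v < b" "b < c" by auto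
  then show "\<exists>b c. v < b \<and> b < c \<and> subseq [v,b,c] x" using h(1) by auto
next
  assume "\<exists>b c. v < b \<and> b < c \<and> subseq [v,b,c] x"
  then obtain b c where "v < b" "b < c" "subseq [v,b,c] x" by auto
  moreover have "red [v,b,c,v] = [0,1,2,0]" using \<open>v < b\<close> \<open>b < c\<close> by (simp add: red_alt card_insert_if)
  ultimately show "newocc [0,1,2,0] x v" by (auto simp: newocc4)
qed

lemma occ0121: "newocc [0,1,2,1] x v \<longleftrightarrow> (\<exists>a c. a < v \<and> v < c \<and> subseq [a,v,c] x)"
proof
  assume "newocc [0,1,2,1] x v"
  then obtain a b c where h: "subseq [a,b,c] x" "red [a,b,c,v] = [0,1,2,1]"
    by (auto simp: newocc4)
  from red4_rel[OF h(2)] have "a < v" "b = v" "v < c" by auto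
  then show "\<exists>a c. a < v \<and> v < c \<and> subseq [a,v,c] x" using h(1) by auto
next
  assume "\<exists>a c. a < v \<and> v < c \<and> subseq [a,v,c] x"
  then obtain a c where "a < v" "v < c" "subseq [a,v,c] x" by auto
  moreover have "red [a,v,c,v] = [0,1,2,1]" using \<open>a < v\<close> \<open>v < c\<close> by (simp add: red_alt card_insert_if)
  ultimately show "newocc [0,1,2,1] x v" by (auto simp: newocc4)
qed

lemma asc_snoc:
  assumes "x \<noteq> []"
  shows "asc (x @ [v]) = asc x + (if last x < v then 1 else 0)"
proof -
  let ?A = "{j. Suc j < length x \<and> x ! j < x ! Suc j}"
  have fin: "finite ?A" by (rule finite_subset[of _ "{..<length x}"]) auto
  have lx: "last x = x ! (length x - 1)" using assms by (simp add: last_conv_nth)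
  have eq: "{j. Suc j < length (x @ [v]) \<and> (x @ [v]) ! j < (x @ [v]) ! Suc j}
      = ?A \<union> (if last x < v then {length x - 1} else {})"
  proof (rule set_eqI)
    fix j
    show "j \<in> {j. Suc j < length (x @ [v]) \<and> (x @ [v]) ! j < (x @ [v]) ! Suc j}
      \<longleftrightarrow> j \<in> ?A \<union> (if last x < v then {length x - 1} else {})"
    proof (cases "Suc j < length x")
      case True
      then show ?thesis by (auto simp: nth_append)
    next
      case False
      show ?thesis
      proof (cases "Suc j = length x")
        case True
        then have j: "j = length x - 1" by simp
        have "(x @ [v]) ! j = last x" using lx j True by (simp add: nth_append)
        moreover have "(x @ [v]) ! Suc j = v" using True by (simp add: nth_append)
        ultimately show ?thesis using True j by auto
      next
        case F2: False
        then show ?thesis using False assms by auto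
      qed
    qed
  qed
  have notin: "length x - 1 \<notin> ?A" using assms by auto
  show ?thesis unfolding asc_def eq using fin notin by auto
qed

lemma asc_single [simp]: "asc [v] = 0"
  by (simp add: asc_def)

lemma ascent_seq_single: "ascent_seq [v] \<longleftrightarrow> v = 0"
  by (simp add: ascent_seq_def)

lemma ascent_seq_snoc:
  assumes "x \<noteq> []"
  shows "ascent_seq (x @ [v]) \<longleftrightarrow> ascent_seq x \<and> v \<le> Suc (asc x)"
proof -
  have A: "(\<forall>i. 0 < i \<and> i < length (x @ [v]) \<longrightarrow> (x @ [v]) ! i \<le> 1 + asc (take i (x @ [v])))
     \<longleftrightarrow> (\<forall>i. 0 < i \<and> i < length x \<longrightarrow> x ! i \<le> 1 + asc (take i x)) \<and> v \<le> Suc (asc x)"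
  proof
    assume H: "\<forall>i. 0 < i \<and> i < length (x @ [v]) \<longrightarrow> (x @ [v]) ! i \<le> 1 + asc (take i (x @ [v]))"
    have "v \<le> Suc (asc x)" using H[rule_format, of "length x"] assms by simp
    moreover have "\<forall>i. 0 < i \<and> i < length x \<longrightarrow> x ! i \<le> 1 + asc (take i x)"
    proof (intro allI impI)
      fix i assume "0 < i \<and> i < length x"
      then show "x ! i \<le> 1 + asc (take i x)" using H[rule_format, of i] by (simp add: nth_append)
    qed
    ultimately show "(\<forall>i. 0 < i \<and> i < length x \<longrightarrow> x ! i \<le> 1 + asc (take i x)) \<and> v \<le> Suc (asc x)" by simp
  next
    assume H: "(\<forall>i. 0 < i \<and> i < length x \<longrightarrow> x ! i \<le> 1 + asc (take i x)) \<and> v \<le> Suc (asc x)"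
    show "\<forall>i. 0 < i \<and> i < length (x @ [v]) \<longrightarrow> (x @ [v]) ! i \<le> 1 + asc (take i (x @ [v]))"
    proof (intro allI impI)
      fix i assume i: "0 < i \<and> i < length (x @ [v])"
      show "(x @ [v]) ! i \<le> 1 + asc (take i (x @ [v]))"
      proof (cases "i < length x")
        case True then show ?thesis using H i by (simp add: nth_append)
      next
        case False then have "i = length x" using i by simp
        then show ?thesis using H by simp
      qed
    qed
  qed
  show ?thesis using assms unfolding ascent_seq_def A by (auto simp: nth_append)
qed

lemma asc_le_length: "asc x \<le> length x - 1"
proof -
  have "{j. Suc j < length x \<and> x ! j < x ! Suc j} \<subseteq> {..<length x - 1}" by auto
  then have "asc x \<le> card {..<length x - 1}" unfolding asc_def by (rule card_mono[rotated]) simp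
  then show ?thesis by simp
qed

lemma ascent_seq_elems: "ascent_seq x \<Longrightarrow> e \<in> set x \<Longrightarrow> e \<le> asc x"
proof (induction x arbitrary: e rule: rev_induct)
  case Nil then show ?case by simp
next
  case (snoc v xs)
  show ?case
  proof (cases "xs = []")
    case True then show ?thesis using snoc by (simp add: ascent_seq_single)
  next
    case False
    have a: "ascent_seq xs" "v \<le> Suc (asc xs)" using snoc.prems(1) ascent_seq_snoc[OF False] by auto
    have lx: "last xs \<in> set xs" using False by simp
    have ih: "\<And>e. e \<in> set xs \<Longrightarrow> e \<le> asc xs" using snoc.IH a(1) by blast
    have ea: "asc (xs @ [v]) = asc xs + (if last xs < v then 1 else 0)" by (rule asc_snoc[OF False])
    show ?thesis
    proof (cases "e = v")
      case True
      then show ?thesis using ea a(2) ih[OF lx] by (auto split: if_splits)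
    next
      case False
      then have "e \<in> set xs" using snoc.prems(2) by simp
      then show ?thesis using ih ea by fastforce
    qed
  qed
qed

lemma ascent_seq_bound: "ascent_seq x \<Longrightarrow> set x \<subseteq> {..<length x}"
proof
  fix e assume "ascent_seq x" "e \<in> set x"
  then have "e \<le> asc x" by (rule ascent_seq_elems)
  moreover have "asc x \<le> length x - 1" by (rule asc_le_length)
  moreover have "length x \<ge> 1" using \<open>e \<in> set x\<close> by (cases x) auto
  ultimately show "e \<in> {..<length x}" by simp
qed

lemma finite_ascent: "finite {x. ascent_seq x \<and> length x = n}"
proof (rule finite_subset)
  show "{x. ascent_seq x \<and> length x = n} \<subseteq> {xs. set xs \<subseteq> {..<n} \<and> length xs = n}"
    using ascent_seq_bound by fastforce
  show "finite {xs. set xs \<subseteq> {..<n} \<and> length xs = (n::nat)}"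
    by (rule finite_lists_length_eq) simp
qed

definition AVP :: "nat list set \<Rightarrow> nat list \<Rightarrow> bool" where
  "AVP P x \<longleftrightarrow> ascent_seq x \<and> (\<forall>p\<in>P. avoids x p)"

lemma a_count_AVP: "a_count P n = card {x. AVP P x \<and> length x = n}"
  unfolding a_count_def AVP_def by (rule arg_cong[where f = card]) auto

lemma finite_AVP: "finite {x. AVP P x \<and> length x = n}"
  by (rule finite_subset[OF _ finite_ascent[of n]]) (auto simp: AVP_def)

lemma AVP_snoc:
  assumes "x \<noteq> []"
  shows "AVP P (x @ [v]) \<longleftrightarrow> AVP P x \<and> v \<le> Suc (asc x) \<and> (\<forall>p\<in>P. \<not> newocc p x v)"
  unfolding AVP_def avoids_def contains_snoc ascent_seq_snoc[OF assms] by blast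

lemma AVP_single:
  assumes "\<forall>p\<in>P. 2 \<le> length p"
  shows "AVP P [v] \<longleftrightarrow> v = 0"
proof -
  have "\<not> contains [v] p" if "p \<in> P" for p
  proof
    assume "contains [v] p"
    then obtain ys where "subseq ys [v]" "red ys = p" by (auto simp: contains_def)
    then have "length ys \<le> 1" using list_emb_length by fastforce
    then show False using \<open>red ys = p\<close> assms that red_length[of ys] by force
  qed
  then show ?thesis unfolding AVP_def avoids_def by (auto simp: ascent_seq_single)
qed

definition runst :: "('s \<Rightarrow> nat \<Rightarrow> 's option) \<Rightarrow> 's \<Rightarrow> nat list \<Rightarrow> 's option" where
  "runst d s0 xs = foldl (\<lambda>os v. Option.bind os (\<lambda>s. d s v)) (Some s0) xs"

lemma runst_Nil [simp]: "runst d s0 [] = Some s0"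
  by (simp add: runst_def)

lemma runst_snoc [simp]: "runst d s0 (xs @ [v]) = Option.bind (runst d s0 xs) (\<lambda>s. d s v)"
  by (simp add: runst_def)

lemma runst_single [simp]: "runst d s0 [v] = d s0 v"
  by (simp add: runst_def)

lemma automaton_correct:
  assumes pl: "\<forall>p\<in>P. 2 \<le> length p"
  assumes st: "\<And>v. d s0 v = (if v = 0 then Some sI else None)"
  assumes i1: "Inv sI [0]"
  assumes step: "\<And>s x v. x \<noteq> [] \<Longrightarrow> Inv s x \<Longrightarrow> AVP P x \<Longrightarrow>
      ((v \<le> Suc (asc x) \<and> (\<forall>p\<in>P. \<not> newocc p x v)) \<longleftrightarrow> d s v \<noteq> None)
      \<and> (\<forall>s'. d s v = Some s' \<longrightarrow> Inv s' (x @ [v]))"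
  shows "x \<noteq> [] \<Longrightarrow> (AVP P x \<longleftrightarrow> runst d s0 x \<noteq> None) \<and> (\<forall>s. runst d s0 x = Some s \<longrightarrow> Inv s x)"
proof (induction x rule: rev_induct)
  case Nil then show ?case by simp
next
  case (snoc v xs)
  show ?case
  proof (cases "xs = []")
    case True
    then show ?thesis using AVP_single[OF pl] st i1 by simp
  next
    case False
    note IH = snoc.IH[OF False]
    show ?thesis
    proof (cases "runst d s0 xs")
      case None
      then show ?thesis using IH AVP_snoc[OF False] by simp
    next
      case (Some s)
      then have I: "Inv s xs" "AVP P xs" using IH by auto
      note S = step[OF False I, of v]
      show ?thesis using S Some AVP_snoc[OF False, of P v] I(2) by auto
    qed
  qed
qed

definition Lset :: "('s \<Rightarrow> nat \<Rightarrow> 's option) \<Rightarrow> 's \<Rightarrow> nat \<Rightarrow> nat list set" where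
  "Lset d s0 n = {x. length x = n \<and> runst d s0 x \<noteq> None}"

definition Kset :: "('s \<Rightarrow> nat \<Rightarrow> 's option) \<Rightarrow> 's \<Rightarrow> ('s \<Rightarrow> nat) \<Rightarrow> nat \<Rightarrow> nat \<Rightarrow> nat list set" where
  "Kset d s0 k n j = {x. length x = n \<and> (\<exists>s. runst d s0 x = Some s \<and> k s = j)}"

lemma runst_not_s0:
  assumes "\<And>s v. d s v \<noteq> Some s0" "x \<noteq> []" "runst d s0 x = Some s"
  shows "s \<noteq> s0"
proof -
  obtain y v where "x = y @ [v]" using assms(2) by (metis rev_exhaust)
  then show ?thesis using assms(1,3) by (cases "runst d s0 y") auto
qed

lemma count_step:
  assumes fin: "finite (Lset d s0 n)" and n: "n \<ge> 1"
    and nos0: "\<And>s v. d s v \<noteq> Some s0"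
    and finv: "\<And>s. finite {v. d s v \<noteq> None}"
    and cnt: "\<And>s. s \<noteq> s0 \<Longrightarrow> card {v. \<exists>s'. d s v = Some s' \<and> k s' = j} = c (k s)"
    and rng: "\<And>s. s \<noteq> s0 \<Longrightarrow> k s < r"
  shows "card (Kset d s0 k (Suc n) j) = (\<Sum>i<r. c i * card (Kset d s0 k n i))"
proof -
  define V where "V x = {v. \<exists>s'. d (the (runst d s0 x)) v = Some s' \<and> k s' = j}" for x
  define L where "L = Lset d s0 n"
  have img: "Kset d s0 k (Suc n) j = (\<lambda>(x,v). x @ [v]) ` (SIGMA x:L. V x)"
  proof (rule set_eqI)
    fix y
    show "y \<in> Kset d s0 k (Suc n) j \<longleftrightarrow> y \<in> (\<lambda>(x,v). x @ [v]) ` (SIGMA x:L. V x)"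
    proof
      assume "y \<in> Kset d s0 k (Suc n) j"
      then obtain s where y: "length y = Suc n" "runst d s0 y = Some s" "k s = j"
        by (auto simp: Kset_def)
      then obtain x v where xv: "y = x @ [v]" by (metis length_Suc_conv_rev)
      then obtain t where t: "runst d s0 x = Some t" "d t v = Some s" using y(2)
        by (cases "runst d s0 x") auto
      have "x \<in> L" using xv y(1) t by (auto simp: L_def Lset_def)
      moreover have "v \<in> V x" using t y(3) by (auto simp: V_def)
      ultimately show "y \<in> (\<lambda>(x,v). x @ [v]) ` (SIGMA x:L. V x)" using xv by force
    next
      assume "y \<in> (\<lambda>(x,v). x @ [v]) ` (SIGMA x:L. V x)"
      then obtain x v where xv: "y = x @ [v]" "x \<in> L" "v \<in> V x" by auto
      then obtain t where t: "runst d s0 x = Some t" "length x = n" by (auto simp: L_def Lset_def)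
      then obtain s' where "d t v = Some s'" "k s' = j" using xv(3) by (auto simp: V_def)
      then show "y \<in> Kset d s0 k (Suc n) j" using xv t by (auto simp: Kset_def)
    qed
  qed
  have inj: "inj_on (\<lambda>(x,v). x @ [v]) (SIGMA x:L. V x)"
    by (auto simp: inj_on_def)
  have finL: "finite L" using fin by (simp add: L_def)
  have finV: "\<forall>x\<in>L. finite (V x)"
  proof
    fix x assume "x \<in> L"
    show "finite (V x)" by (rule finite_subset[OF _ finv[of "the (runst d s0 x)"]]) (auto simp: V_def)
  qed
  have c1: "card (Kset d s0 k (Suc n) j) = (\<Sum>x\<in>L. card (V x))"
    unfolding img using card_image[OF inj] card_SigmaI[OF finL finV] by simp
  define g where "g x = k (the (runst d s0 x))" for x
  have c2: "\<forall>x\<in>L. card (V x) = c (g x)"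
  proof
    fix x assume "x \<in> L"
    then obtain s where s: "runst d s0 x = Some s" "length x = n" by (auto simp: L_def Lset_def)
    then have "x \<noteq> []" using n by auto
    then have "s \<noteq> s0" using runst_not_s0[OF nos0 _ s(1)] by simp
    then show "card (V x) = c (g x)" using cnt[of s] s by (simp add: V_def g_def)
  qed
  have rg: "g ` L \<subseteq> {..<r}"
  proof
    fix i assume "i \<in> g ` L"
    then obtain x where "x \<in> L" "i = g x" by auto
    then obtain s where s: "runst d s0 x = Some s" "length x = n" by (auto simp: L_def Lset_def)
    then have "x \<noteq> []" using n by auto
    then have "s \<noteq> s0" using runst_not_s0[OF nos0 _ s(1)] by simp
    then show "i \<in> {..<r}" using rng[of s] s \<open>i = g x\<close> by (simp add: g_def)
  qed
  have "(\<Sum>x\<in>L. card (V x)) = (\<Sum>x\<in>L. c (g x))" using c2 by simp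
  also have "\<dots> = (\<Sum>i<r. \<Sum>x\<in>{x. x \<in> L \<and> g x = i}. c (g x))"
    by (rule sum.group[OF finL _ rg, symmetric]) simp
  also have "\<dots> = (\<Sum>i<r. c i * card {x. x \<in> L \<and> g x = i})"
    by (rule sum.cong[OF refl]) simp
  also have "\<dots> = (\<Sum>i<r. c i * card (Kset d s0 k n i))"
  proof (rule sum.cong[OF refl])
    fix i
    have "{x. x \<in> L \<and> g x = i} = Kset d s0 k n i"
      by (auto simp: L_def Lset_def Kset_def g_def)
    then show "c i * card {x. x \<in> L \<and> g x = i} = c i * card (Kset d s0 k n i)" by simp
  qed
  finally show ?thesis using c1 by simp
qed

lemma count_total:
  assumes fin: "finite (Lset d s0 n)" and n: "n \<ge> 1"
    and nos0: "\<And>s v. d s v \<noteq> Some s0"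
    and rng: "\<And>s. s \<noteq> s0 \<Longrightarrow> k s < r"
  shows "card (Lset d s0 n) = (\<Sum>i<r. card (Kset d s0 k n i))"
proof -
  define L where "L = Lset d s0 n"
  define g where "g x = k (the (runst d s0 x))" for x
  have finL: "finite L" using fin by (simp add: L_def)
  have rg: "g ` L \<subseteq> {..<r}"
  proof
    fix i assume "i \<in> g ` L"
    then obtain x where "x \<in> L" "i = g x" by auto
    then obtain s where s: "runst d s0 x = Some s" "length x = n" by (auto simp: L_def Lset_def)
    then have "x \<noteq> []" using n by auto
    then have "s \<noteq> s0" using runst_not_s0[OF nos0 _ s(1)] by simp
    then show "i \<in> {..<r}" using rng[of s] s \<open>i = g x\<close> by (simp add: g_def)
  qed
  have "card L = (\<Sum>x\<in>L. 1)" by simp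
  also have "\<dots> = (\<Sum>i<r. \<Sum>x\<in>{x. x \<in> L \<and> g x = i}. 1)"
    by (rule sum.group[OF finL _ rg, symmetric]) simp
  also have "\<dots> = (\<Sum>i<r. card (Kset d s0 k n i))"
  proof (rule sum.cong[OF refl])
    fix i
    have "{x. x \<in> L \<and> g x = i} = Kset d s0 k n i"
      by (auto simp: L_def Lset_def Kset_def g_def)
    then show "(\<Sum>x\<in>{x. x \<in> L \<and> g x = i}. 1) = card (Kset d s0 k n i)" by simp
  qed
  finally show ?thesis by (simp add: L_def)
qed

lemma Lset_AVP:
  assumes "\<And>x. x \<noteq> [] \<Longrightarrow> (AVP P x \<longleftrightarrow> runst d s0 x \<noteq> None)" "n \<ge> 1"
  shows "Lset d s0 n = {x. AVP P x \<and> length x = n}"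
proof -
  have "\<And>x. length x = n \<Longrightarrow> x \<noteq> []" using assms(2) by auto
  then show ?thesis using assms(1) unfolding Lset_def by blast
qed

lemma Kset_one:
  "Kset d s0 k (Suc 0) j = (\<lambda>v. [v]) ` {v. \<exists>s. d s0 v = Some s \<and> k s = j}"
  by (auto simp: Kset_def length_Suc_conv)

lemma Kset_one_card:
  assumes "\<And>v. d s0 v = (if v = 0 then Some sI else None)"
  shows "card (Kset d s0 k (Suc 0) j) = (if k sI = j then 1 else 0)"
proof -
  have "{v. \<exists>s. d s0 v = Some s \<and> k s = j} = (if k sI = j then {0} else {})"
    using assms by auto
  then show ?thesis unfolding Kset_one by simp
qed

lemma subseq_set: "subseq ys x \<Longrightarrow> set ys \<subseteq> set x"
  by (induction rule: list_emb.induct) auto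

lemma subseq_sorted: "subseq ys x \<Longrightarrow> sorted x \<Longrightarrow> sorted ys"
proof (induction rule: list_emb.induct)
  case (list_emb_Nil ys) then show ?case by simp
next
  case (list_emb_Cons xs ys y) then show ?case by simp
next
  case (list_emb_Cons2 x y xs ys)
  then have "set xs \<subseteq> set ys" by (simp add: subseq_set)
  then show ?case using list_emb_Cons2 by auto
qed

lemma sorted_le_last: "sorted x \<Longrightarrow> e \<in> set x \<Longrightarrow> e \<le> last x"
proof (induction x rule: rev_induct)
  case Nil then show ?case by simp
next
  case (snoc a xs) then show ?case by (auto simp: sorted_append)
qed

lemma sub3_set: "subseq [a,b,c] x \<Longrightarrow> a \<in> set x \<and> b \<in> set x \<and> c \<in> set x"
  using subseq_set by fastforce

lemma sub2_set: "subseq [a,b] x \<Longrightarrow> a \<in> set x \<and> b \<in> set x"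
  using subseq_set by fastforce

lemma sub3_sorted: "subseq [a,b,c] x \<Longrightarrow> sorted x \<Longrightarrow> a \<le> b \<and> b \<le> c"
  using subseq_sorted by fastforce

lemma sub2_sorted: "subseq [a,b] x \<Longrightarrow> sorted x \<Longrightarrow> a \<le> b"
  using subseq_sorted by fastforce

lemma sub3_sub2: "subseq [a,b,c] x \<Longrightarrow> subseq [a,b] x \<and> subseq [a,c] x \<and> subseq [b,c] x"
proof -
  assume h: "subseq [a,b,c] x"
  have "subseq [a,b] [a,b,c]" "subseq [a,c] [a,b,c]" "subseq [b,c] [a,b,c]" by auto
  then show ?thesis using h subseq_order.order_trans by blast
qed

lemma sorted_snoc_iff: "sorted (x @ [v]) \<longleftrightarrow> sorted x \<and> (\<forall>e\<in>set x. e \<le> v)"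
  by (simp add: sorted_append)

definition O0101 :: "nat list \<Rightarrow> nat \<Rightarrow> bool" where "O0101 x v \<longleftrightarrow> (\<exists>a. a < v \<and> subseq [a,v,a] x)"
definition O0102 :: "nat list \<Rightarrow> nat \<Rightarrow> bool" where "O0102 x v \<longleftrightarrow> (\<exists>a b. a < b \<and> b < v \<and> subseq [a,b,a] x)"
definition O0112 :: "nat list \<Rightarrow> nat \<Rightarrow> bool" where "O0112 x v \<longleftrightarrow> (\<exists>a b. a < b \<and> b < v \<and> subseq [a,b,b] x)"
definition O0120 :: "nat list \<Rightarrow> nat \<Rightarrow> bool" where "O0120 x v \<longleftrightarrow> (\<exists>b c. v < b \<and> b < c \<and> subseq [v,b,c] x)"
definition O0121 :: "nat list \<Rightarrow> nat \<Rightarrow> bool" where "O0121 x v \<longleftrightarrow> (\<exists>a c. a < v \<and> v < c \<and> subseq [a,v,c] x)"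

lemma no_O_iff:
  "newocc [0,1,0,1] x v \<longleftrightarrow> O0101 x v"
  "newocc [0,1,0,2] x v \<longleftrightarrow> O0102 x v"
  "newocc [0,1,1,2] x v \<longleftrightarrow> O0112 x v"
  "newocc [0,1,2,0] x v \<longleftrightarrow> O0120 x v"
  "newocc [0,1,2,1] x v \<longleftrightarrow> O0121 x v"
  unfolding O0101_def O0102_def O0112_def O0120_def O0121_def
  by (rule occ0101, rule occ0102, rule occ0112, rule occ0120, rule occ0121)

lemma noO0101_sorted: "sorted x \<Longrightarrow> \<not> O0101 x v"
  unfolding O0101_def using sub3_sorted by fastforce
lemma noO0102_sorted: "sorted x \<Longrightarrow> \<not> O0102 x v"
  unfolding O0102_def using sub3_sorted by fastforce
lemma noO0101_0: "\<not> O0101 x 0" unfolding O0101_def by auto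
lemma noO0121_0: "\<not> O0121 x 0" unfolding O0121_def by auto
lemma noO0102_le1: "v \<le> 1 \<Longrightarrow> \<not> O0102 x v" unfolding O0102_def
proof clarify
  fix a b assume "v \<le> 1" "a < b" "b < v" then show False by linarith
qed
lemma noO0112_le1: "v \<le> 1 \<Longrightarrow> \<not> O0112 x v" unfolding O0112_def
proof clarify
  fix a b assume "v \<le> 1" "a < b" "b < v" then show False by linarith
qed
lemma noO0120_bound: "(\<And>e. e \<in> set x \<Longrightarrow> e \<le> Suc v) \<Longrightarrow> \<not> O0120 x v"
proof
  assume h: "\<And>e. e \<in> set x \<Longrightarrow> e \<le> Suc v" and "O0120 x v"
  then obtain b c where bc: "v < b" "b < c" "subseq [v,b,c] x" unfolding O0120_def by blast
  then have "c \<in> set x" using sub3_set[OF bc(3)] by simp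
  then have "c \<le> Suc v" by (rule h)
  then show False using bc(1,2) by linarith
qed
lemma noO0121_bound: "(\<And>e. e \<in> set x \<Longrightarrow> e \<le> v) \<Longrightarrow> \<not> O0121 x v"
proof
  assume h: "\<And>e. e \<in> set x \<Longrightarrow> e \<le> v" and "O0121 x v"
  then obtain a c where ac: "v < c" "subseq [a,v,c] x" unfolding O0121_def by blast
  then have "c \<in> set x" using sub3_set[OF ac(2)] by simp
  then have "c \<le> v" by (rule h)
  then show False using ac(1) by linarith
qed
lemma noO0101_notin: "v \<notin> set x \<Longrightarrow> \<not> O0101 x v"
  unfolding O0101_def using sub3_set by fastforce
lemma noO0120_notin: "v \<notin> set x \<Longrightarrow> \<not> O0120 x v"
  unfolding O0120_def using sub3_set by fastforce
lemma noO0121_notin: "v \<notin> set x \<Longrightarrow> \<not> O0121 x v"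
  unfolding O0121_def using sub3_set by fastforce

lemma O0101I: "a < v \<Longrightarrow> subseq [a,v,a] x \<Longrightarrow> O0101 x v" unfolding O0101_def by blast
lemma O0102I: "a < b \<Longrightarrow> b < v \<Longrightarrow> subseq [a,b,a] x \<Longrightarrow> O0102 x v" unfolding O0102_def by blast
lemma O0112I: "a < b \<Longrightarrow> b < v \<Longrightarrow> subseq [a,b,b] x \<Longrightarrow> O0112 x v" unfolding O0112_def by blast
lemma O0120I: "v < b \<Longrightarrow> b < c \<Longrightarrow> subseq [v,b,c] x \<Longrightarrow> O0120 x v" unfolding O0120_def by blast
lemma O0121I: "a < v \<Longrightarrow> v < c \<Longrightarrow> subseq [a,v,c] x \<Longrightarrow> O0121 x v" unfolding O0121_def by blast

lemma finite_by_bound: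
  fixes d :: "'s \<Rightarrow> nat \<Rightarrow> 't option"
  shows "(\<And>v. d s v \<noteq> None \<Longrightarrow> v \<le> B) \<Longrightarrow> finite {v. d s v \<noteq> None}"
  by (rule finite_subset[of _ "{..B}"]) auto

definition NR :: "nat list \<Rightarrow> bool" where
  "NR x \<longleftrightarrow> (\<forall>a b. a < b \<longrightarrow> \<not> subseq [a,b,b] x)"

lemma NR_noO: "NR x \<Longrightarrow> \<not> O0112 x v"
  unfolding NR_def O0112_def by blast

lemma NR_snoc_new: "NR x \<Longrightarrow> v \<notin> set x \<Longrightarrow> NR (x @ [v])"
  unfolding NR_def using sub2_set by fastforce

lemma NR_snoc_0: "NR x \<Longrightarrow> NR (x @ [0])"
  unfolding NR_def by auto

abbreviation "P5 \<equiv> {[0,1,0,2], [0,1,2,0], [0,1,2,1]} :: nat list set"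

datatype st5 = S5start | Z5 | S5 | N5 | W5 nat

fun d5 :: "st5 \<Rightarrow> nat \<Rightarrow> st5 option" where
  "d5 S5start v = (if v = 0 then Some Z5 else None)"
| "d5 Z5 v = (if v = 0 then Some Z5 else if v = 1 then Some S5 else None)"
| "d5 S5 v = (if v = 1 then Some S5 else if v = 0 then Some N5 else if v = 2 then Some (W5 2) else None)"
| "d5 N5 v = (if v \<le> 1 then Some N5 else None)"
| "d5 (W5 m) v = (if v = m \<or> v = Suc m then Some (W5 v) else None)"

fun I5 :: "st5 \<Rightarrow> nat list \<Rightarrow> bool" where
  "I5 S5start x = False"
| "I5 Z5 x = (set x \<subseteq> {0} \<and> sorted x \<and> asc x = 0)"
| "I5 S5 x = (set x \<subseteq> {0,1} \<and> sorted x \<and> last x = 1 \<and> subseq [0,1] x \<and> asc x = 1)"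
| "I5 N5 x = (set x \<subseteq> {0,1} \<and> subseq [0,1,0] x)"
| "I5 (W5 m) x = (sorted x \<and> last x = m \<and> 2 \<le> m \<and> asc x = m \<and> subseq [0,m] x
      \<and> (\<forall>w. 0 < w \<and> w < m \<longrightarrow> subseq [0,w,m] x))"

lemma P5_simp: "(\<forall>p\<in>P5. \<not> newocc p x v) \<longleftrightarrow> \<not> O0102 x v \<and> \<not> O0120 x v \<and> \<not> O0121 x v"
proof -
  have "(\<forall>p\<in>P5. \<not> newocc p x v) \<longleftrightarrow>
    \<not> newocc [0,1,0,2] x v \<and> \<not> newocc [0,1,2,0] x v \<and> \<not> newocc [0,1,2,1] x v" by blast
  then show ?thesis unfolding no_O_iff .
qed

lemma step5:
  assumes x: "x \<noteq> []" and I: "I5 s x"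
  shows "((v \<le> Suc (asc x) \<and> (\<forall>p\<in>P5. \<not> newocc p x v)) \<longleftrightarrow> d5 s v \<noteq> None)
     \<and> (\<forall>s'. d5 s v = Some s' \<longrightarrow> I5 s' (x @ [v]))"
proof (cases s)
  case S5start then show ?thesis using I by simp
next
  case Z5
  then have h: "set x \<subseteq> {0}" "sorted x" "asc x = 0" using I by auto
  have l: "last x = 0" using h(1) x last_in_set by blast
  have z0: "0 \<in> set x" using l x last_in_set by metis
  have le: "\<And>e. e \<in> set x \<Longrightarrow> e \<le> v" using h(1) by auto
  have o1: "\<not> O0102 x v" using noO0102_sorted[OF h(2)] .
  have o2: "\<not> O0120 x v" by (rule noO0120_bound) (use le in fastforce)
  have o3: "\<not> O0121 x v" by (rule noO0121_bound) (use le in fastforce)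
  note o = o1 o2 o3
  have A: "(v \<le> Suc (asc x) \<and> \<not> O0102 x v \<and> \<not> O0120 x v \<and> \<not> O0121 x v) \<longleftrightarrow> d5 s v \<noteq> None"
    using o h(3) Z5 by auto
  have B: "I5 s' (x @ [v])" if "d5 s v = Some s'" for s'
  proof (cases "v = 0")
    case True
    then have "s' = Z5" using that Z5 by simp
    then show ?thesis using True h l x by (auto simp: asc_snoc sorted_snoc_iff)
  next
    case False
    then have "v = 1" "s' = S5" using that Z5 by (auto split: if_splits)
    then show ?thesis using h l x z0 by (auto simp: asc_snoc sorted_snoc_iff)
  qed
  have B': "\<forall>s'. d5 s v = Some s' \<longrightarrow> I5 s' (x @ [v])" using B by blast
  show ?thesis unfolding P5_simp using A B' by (rule conjI)
next
  case S5
  then have h: "set x \<subseteq> {0,1}" "sorted x" "last x = 1" "subseq [0,1] x" "asc x = 1" using I by auto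
  have z0: "0 \<in> set x" using sub2_set[OF h(4)] by simp
  have le1: "\<And>e. e \<in> set x \<Longrightarrow> e \<le> 1" using h(1) by auto
  have A: "(v \<le> Suc (asc x) \<and> \<not> O0102 x v \<and> \<not> O0120 x v \<and> \<not> O0121 x v) \<longleftrightarrow> d5 s v \<noteq> None"
  proof (cases "v \<le> 2")
    case True
    have "\<not> O0102 x v" using noO0102_sorted[OF h(2)] .
    moreover have "\<not> O0120 x v" by (rule noO0120_bound) (use le1 in fastforce)
    moreover have "v \<noteq> 0 \<Longrightarrow> \<not> O0121 x v" by (rule noO0121_bound) (use le1 in fastforce)
    moreover have "d5 s v \<noteq> None" using True S5 by auto
    ultimately show ?thesis using True h(5) noO0121_0 by (cases "v = 0") auto
  next
    case False
    then show ?thesis using h(5) S5 by auto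
  qed
  have B: "I5 s' (x @ [v])" if "d5 s v = Some s'" for s'
  proof -
    have "v = 0 \<or> v = 1 \<or> v = 2" using that S5 by (auto split: if_splits)
    moreover have ?thesis if "v = 0" "s' = N5" using that h by auto
    moreover have ?thesis if "v = 1" "s' = S5"
    proof -
      have "sorted (x @ [v])" using h(1,2) that by (auto simp: sorted_snoc_iff)
      then show ?thesis using that h x by (auto simp: asc_snoc)
    qed
    moreover have ?thesis if "v = 2" "s' = W5 2"
    proof -
      have "\<forall>w. 0 < w \<and> w < 2 \<longrightarrow> subseq [0,w,2] (x @ [2])" using h(4) by (auto simp: less_2_cases_iff)
      moreover have "sorted (x @ [2])" using h(1,2) by (auto simp: sorted_snoc_iff)
      ultimately show ?thesis using that h x z0 by (auto simp: asc_snoc)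
    qed
    ultimately show ?thesis using that S5 by (auto split: if_splits)
  qed
  have B': "\<forall>s'. d5 s v = Some s' \<longrightarrow> I5 s' (x @ [v])" using B by blast
  show ?thesis unfolding P5_simp using A B' by (rule conjI)
next
  case N5
  then have h: "set x \<subseteq> {0,1}" "subseq [0,1,0] x" using I by auto
  have le1: "\<And>e. e \<in> set x \<Longrightarrow> e \<le> 1" using h(1) by auto
  have A: "(v \<le> Suc (asc x) \<and> \<not> O0102 x v \<and> \<not> O0120 x v \<and> \<not> O0121 x v) \<longleftrightarrow> d5 s v \<noteq> None"
  proof (cases "v \<le> 1")
    case True
    have "\<not> O0102 x v" using noO0102_le1[OF True] .
    moreover have "\<not> O0120 x v" by (rule noO0120_bound) (use le1 in fastforce)
    moreover have "v \<noteq> 0 \<Longrightarrow> \<not> O0121 x v" by (rule noO0121_bound) (use le1 True in fastforce)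
    moreover have "d5 s v \<noteq> None" using True N5 by auto
    moreover have "v \<le> Suc (asc x)" using True by simp
    ultimately show ?thesis using noO0121_0 by (cases "v = 0") auto
  next
    case False
    then have "O0102 x v" using O0102I[of 0 1 v x] h(2) by simp
    then show ?thesis using False N5 by auto
  qed
  have B: "I5 s' (x @ [v])" if "d5 s v = Some s'" for s'
    using that N5 h by (auto split: if_splits)
  have B': "\<forall>s'. d5 s v = Some s' \<longrightarrow> I5 s' (x @ [v])" using B by blast
  show ?thesis unfolding P5_simp using A B' by (rule conjI)
next
  case (W5 m)
  then have h: "sorted x" "last x = m" "2 \<le> m" "asc x = m" "subseq [0,m] x"
      "\<And>w. 0 < w \<Longrightarrow> w < m \<Longrightarrow> subseq [0,w,m] x" using I by auto
  have le: "\<And>e. e \<in> set x \<Longrightarrow> e \<le> m" using h(1,2) sorted_le_last by metis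
  have z0: "0 \<in> set x" using sub2_set[OF h(5)] by simp
  have A: "(v \<le> Suc (asc x) \<and> \<not> O0102 x v \<and> \<not> O0120 x v \<and> \<not> O0121 x v) \<longleftrightarrow> d5 s v \<noteq> None"
  proof (cases "v < m")
    case True
    show ?thesis
    proof (cases "v = 0")
      case True
      have "O0120 x v" using O0120I[of v 1 m x] h(3) h(6)[of 1] True by simp
      then show ?thesis using W5 h(3) True by auto
    next
      case False
      have "O0121 x v" using O0121I[of 0 v m x] h(6)[of v] False \<open>v < m\<close> by simp
      then show ?thesis using W5 \<open>v < m\<close> by auto
    qed
  next
    case False
    have o1: "\<not> O0102 x v" using noO0102_sorted[OF h(1)] .
    have o2: "\<not> O0120 x v" by (rule noO0120_bound) (use le False in fastforce)
    have o3: "\<not> O0121 x v" by (rule noO0121_bound) (use le False in fastforce)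
    show ?thesis
    proof (cases "v \<le> Suc m")
      case True
      then have "v = m \<or> v = Suc m" using False by linarith
      then have "d5 s v \<noteq> None" using W5 by auto
      then show ?thesis using True h(4) o1 o2 o3 by simp
    next
      case F2: False
      then have "d5 s v = None" using W5 by auto
      then show ?thesis using F2 h(4) by simp
    qed
  qed
  have B: "I5 s' (x @ [v])" if "d5 s v = Some s'" for s'
  proof -
    have v: "v = m \<or> v = Suc m" "s' = W5 v" using that W5 by (auto split: if_splits)
    have "\<forall>e\<in>set x. e \<le> v" using le v(1) le_SucI by blast
    then have "sorted (x @ [v])" using h(1) by (simp add: sorted_snoc_iff)
    moreover have "asc (x @ [v]) = v" using v(1) h(2,4) x by (auto simp: asc_snoc)
    moreover have "\<forall>w. 0 < w \<and> w < v \<longrightarrow> subseq [0,w,v] (x @ [v])"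
    proof (intro allI impI)
      fix w assume w: "0 < w \<and> w < v"
      show "subseq [0,w,v] (x @ [v])"
      proof (cases "w < m")
        case True
        then have "subseq [0,w,m] x" using h(6)[of w] w by simp
        then have "subseq [0,w] x" by (rule conjunct1[OF sub3_sub2])
        then show ?thesis by simp
      next
        case False then have "w = m" using w v(1) by auto
        then show ?thesis using h(5) by simp
      qed
    qed
    moreover have "2 \<le> v" using v(1) h(3) by auto
    moreover have "subseq [0,v] (x @ [v])" using z0 by simp
    ultimately show ?thesis using v(2) by simp
  qed
  have B': "\<forall>s'. d5 s v = Some s' \<longrightarrow> I5 s' (x @ [v])" using B by blast
  show ?thesis unfolding P5_simp using A B' by (rule conjI)
qed

lemma C5_correct: "x \<noteq> [] \<Longrightarrow> (AVP P5 x \<longleftrightarrow> runst d5 S5start x \<noteq> None)"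
proof -
  assume "x \<noteq> []"
  have "(AVP P5 x \<longleftrightarrow> runst d5 S5start x \<noteq> None) \<and> (\<forall>s. runst d5 S5start x = Some s \<longrightarrow> I5 s x)"
  proof (rule automaton_correct[where Inv = I5 and sI = Z5])
    show "\<forall>p\<in>P5. 2 \<le> length p" by simp
    show "\<And>v. d5 S5start v = (if v = 0 then Some Z5 else None)" by simp
    show "I5 Z5 [0]" by simp
    show "\<And>s x v. x \<noteq> [] \<Longrightarrow> I5 s x \<Longrightarrow> AVP P5 x \<Longrightarrow>
      ((v \<le> Suc (asc x) \<and> (\<forall>p\<in>P5. \<not> newocc p x v)) \<longleftrightarrow> d5 s v \<noteq> None)
      \<and> (\<forall>s'. d5 s v = Some s' \<longrightarrow> I5 s' (x @ [v]))" using step5 by blast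
    show "x \<noteq> []" by fact
  qed
  then show ?thesis by blast
qed

fun k5 :: "st5 \<Rightarrow> nat" where
  "k5 S5start = 0" | "k5 Z5 = 0" | "k5 S5 = 1" | "k5 N5 = 2" | "k5 (W5 m) = 3"

abbreviation "K5 n j \<equiv> card (Kset d5 S5start k5 n j)"

lemma L5_eq: "n \<ge> 1 \<Longrightarrow> Lset d5 S5start n = {x. AVP P5 x \<and> length x = n}"
  by (rule Lset_AVP) (use C5_correct in auto)

lemma L5_fin: "n \<ge> 1 \<Longrightarrow> finite (Lset d5 S5start n)"
  using L5_eq finite_AVP by simp

lemma d5_nos0: "d5 s v \<noteq> Some S5start"
  by (cases s) auto

lemma d5_fin: "finite {v. d5 s v \<noteq> None}"
  by (rule finite_by_bound[where B = "case s of W5 m \<Rightarrow> Suc m | _ \<Rightarrow> 2"])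
     (cases s; auto split: if_splits)

lemma k5_rng: "s \<noteq> S5start \<Longrightarrow> k5 s < 4" by (cases s) auto

lemma c5_sets:
  "s \<noteq> S5start \<Longrightarrow> {v. \<exists>s'. d5 s v = Some s' \<and> k5 s' = j} =
    (case s of Z5 \<Rightarrow> (if j = 0 then {0} else if j = 1 then {1} else {})
     | S5 \<Rightarrow> (if j = 1 then {1} else if j = 2 then {0} else if j = 3 then {2} else {})
     | N5 \<Rightarrow> (if j = 2 then {0,1} else {})
     | W5 m \<Rightarrow> (if j = 3 then {m, Suc m} else {})
     | S5start \<Rightarrow> {})"
  by (cases s) (auto split: if_splits)

lemma rec5:
  assumes "n \<ge> 1"
  shows "K5 (Suc n) 0 = K5 n 0"
    "K5 (Suc n) 1 = K5 n 0 + K5 n 1"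
    "K5 (Suc n) 2 = K5 n 1 + 2 * K5 n 2"
    "K5 (Suc n) 3 = K5 n 1 + 2 * K5 n 3"
proof -
  note cs = count_step[OF L5_fin[OF assms] assms d5_nos0 d5_fin _ k5_rng]
  have "K5 (Suc n) 0 = (\<Sum>i<4. (\<lambda>i. if i = 0 then 1 else 0) i * K5 n i)"
    by (rule cs) (auto simp: c5_sets split: st5.splits)
  then show "K5 (Suc n) 0 = K5 n 0" by (simp add: numeral_eq_Suc)
  have "K5 (Suc n) 1 = (\<Sum>i<4. (\<lambda>i. if i \<le> 1 then 1 else 0) i * K5 n i)"
    by (rule cs) (auto simp: c5_sets split: st5.splits)
  then show "K5 (Suc n) 1 = K5 n 0 + K5 n 1" by (simp add: numeral_eq_Suc)
  have "K5 (Suc n) 2 = (\<Sum>i<4. (\<lambda>i. if i = 1 then 1 else if i = 2 then 2 else 0) i * K5 n i)"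
    by (rule cs) (auto simp: c5_sets split: st5.splits)
  then show "K5 (Suc n) 2 = K5 n 1 + 2 * K5 n 2" by (simp add: numeral_eq_Suc)
  have "K5 (Suc n) 3 = (\<Sum>i<4. (\<lambda>i. if i = 1 then 1 else if i = 3 then 2 else 0) i * K5 n i)"
    by (rule cs) (auto simp: c5_sets split: st5.splits)
  then show "K5 (Suc n) 3 = K5 n 1 + 2 * K5 n 3" by (simp add: numeral_eq_Suc)
qed

lemma base5: "K5 1 0 = 1" "K5 1 1 = 0" "K5 1 2 = 0" "K5 1 3 = 0"
  using Kset_one_card[of d5 S5start Z5 k5] by simp_all

lemma closed5:
  assumes "n \<ge> 1"
  shows "K5 n 0 = 1 \<and> K5 n 1 = n - 1 \<and> K5 n 2 + n = 2 ^ (n - 1) \<and> K5 n 3 + n = 2 ^ (n - 1)"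
  using assms
proof (induction n rule: dec_induct)
  case base then show ?case using base5 by simp
next
  case (step n)
  note r = rec5[OF step.hyps(1)]
  have "1 \<le> n" by fact
  then obtain k where k: "n = Suc k" by (cases n) auto
  show ?case using step.IH r k by (auto simp: algebra_simps)
qed

theorem count5: "n \<ge> 1 \<Longrightarrow> a_count P5 n = 2 ^ n - n"
proof -
  assume n: "n \<ge> 1"
  have "a_count P5 n = card (Lset d5 S5start n)" using L5_eq[OF n] by (simp add: a_count_AVP)
  also have "\<dots> = (\<Sum>i<4. K5 n i)"
    by (rule count_total[OF L5_fin[OF n] n d5_nos0 k5_rng])
  also have "\<dots> = K5 n 0 + K5 n 1 + K5 n 2 + K5 n 3" by (simp add: numeral_eq_Suc)
  finally have "a_count P5 n + n = 2 ^ n" using closed5[OF n] n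
    by (cases n) (auto simp: algebra_simps)
  then show ?thesis by simp
qed

abbreviation "P2 \<equiv> {[0,1,0,1], [0,1,0,2], [0,1,2,1]} :: nat list set"

datatype st2 = S2start | Z2 | W2 nat | F2

fun d2 :: "st2 \<Rightarrow> nat \<Rightarrow> st2 option" where
  "d2 S2start v = (if v = 0 then Some Z2 else None)"
| "d2 Z2 v = (if v = 0 then Some Z2 else if v = 1 then Some (W2 0) else None)"
| "d2 (W2 k) v = (if v = Suc k \<or> v = Suc (Suc k) then Some (W2 (v - 1)) else if v = 0 then Some F2 else None)"
| "d2 F2 v = (if v = 0 then Some F2 else None)"

fun I2 :: "st2 \<Rightarrow> nat list \<Rightarrow> bool" where
  "I2 S2start x = False"
| "I2 Z2 x = (set x \<subseteq> {0} \<and> sorted x \<and> asc x = 0)"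
| "I2 (W2 k) x = (sorted x \<and> last x = Suc k \<and> asc x = Suc k \<and> subseq [0,Suc k] x
      \<and> (\<forall>w. 0 < w \<and> w < Suc k \<longrightarrow> subseq [0,w,Suc k] x))"
| "I2 F2 x = (\<exists>m. 1 \<le> m \<and> (\<forall>w. 0 < w \<and> w \<le> m \<longrightarrow> subseq [0,w,0] x))"

lemma P2_simp: "(\<forall>p\<in>P2. \<not> newocc p x v) \<longleftrightarrow> \<not> O0101 x v \<and> \<not> O0102 x v \<and> \<not> O0121 x v"
proof -
  have "(\<forall>p\<in>P2. \<not> newocc p x v) \<longleftrightarrow>
    \<not> newocc [0,1,0,1] x v \<and> \<not> newocc [0,1,0,2] x v \<and> \<not> newocc [0,1,2,1] x v" by blast
  then show ?thesis unfolding no_O_iff .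
qed

lemma step2:
  assumes x: "x \<noteq> []" and I: "I2 s x"
  shows "((v \<le> Suc (asc x) \<and> (\<forall>p\<in>P2. \<not> newocc p x v)) \<longleftrightarrow> d2 s v \<noteq> None)
     \<and> (\<forall>s'. d2 s v = Some s' \<longrightarrow> I2 s' (x @ [v]))"
proof (cases s)
  case S2start then show ?thesis using I by simp
next
  case Z2
  then have h: "set x \<subseteq> {0}" "sorted x" "asc x = 0" using I by auto
  have l: "last x = 0" using h(1) x last_in_set by blast
  have z0: "0 \<in> set x" using l x last_in_set by metis
  have A: "(v \<le> Suc (asc x) \<and> \<not> O0101 x v \<and> \<not> O0102 x v \<and> \<not> O0121 x v) \<longleftrightarrow> d2 s v \<noteq> None"
  proof (cases "v \<le> 1")
    case True
    have o1: "\<not> O0101 x v" using noO0101_sorted[OF h(2)] .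
    have o2: "\<not> O0102 x v" using noO0102_sorted[OF h(2)] .
    have o3: "\<not> O0121 x v" by (rule noO0121_bound) (use h(1) True in auto)
    have "d2 s v \<noteq> None" using True Z2 by auto
    then show ?thesis using o1 o2 o3 True h(3) by simp
  next
    case False
    then have "d2 s v = None" using Z2 by auto
    then show ?thesis using False h(3) by simp
  qed
  have B: "I2 s' (x @ [v])" if "d2 s v = Some s'" for s'
  proof (cases "v = 0")
    case True
    then have "s' = Z2" using that Z2 by simp
    then show ?thesis using True h l x by (auto simp: asc_snoc sorted_snoc_iff)
  next
    case False
    then have v: "v = 1" "s' = W2 0" using that Z2 by (auto split: if_splits)
    have "sorted (x @ [v])" using h(1,2) v by (auto simp: sorted_snoc_iff)
    moreover have "asc (x @ [v]) = 1" using h(3) l x v by (simp add: asc_snoc)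
    moreover have "subseq [0,1] (x @ [v])" using z0 v by simp
    moreover have "\<forall>w. 0 < w \<and> w < (1::nat) \<longrightarrow> subseq [0,w,1] (x @ [v])" by auto
    ultimately show ?thesis using v by simp
  qed
  have B': "\<forall>s'. d2 s v = Some s' \<longrightarrow> I2 s' (x @ [v])" using B by blast
  show ?thesis unfolding P2_simp using A B' by (rule conjI)
next
  case (W2 k)
  define m where "m = Suc k"
  have dW: "d2 s v = (if v = m \<or> v = Suc m then Some (W2 (v - 1)) else if v = 0 then Some F2 else None)"
    using W2 by (simp add: m_def)
  have h: "sorted x" "last x = m" "1 \<le> m" "asc x = m" "subseq [0,m] x"
      "\<And>w. 0 < w \<Longrightarrow> w < m \<Longrightarrow> subseq [0,w,m] x" using I W2 by (auto simp: m_def)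
  have le: "\<And>e. e \<in> set x \<Longrightarrow> e \<le> m" using h(1,2) sorted_le_last by metis
  have z0: "0 \<in> set x" using sub2_set[OF h(5)] by simp
  have A: "(v \<le> Suc (asc x) \<and> \<not> O0101 x v \<and> \<not> O0102 x v \<and> \<not> O0121 x v) \<longleftrightarrow> d2 s v \<noteq> None"
  proof (cases "v = 0")
    case True
    have "d2 s v \<noteq> None" using True dW by auto
    then show ?thesis using True noO0101_0 noO0102_le1[of 0] noO0121_0 by simp
  next
    case v0: False
    show ?thesis
    proof (cases "v < m")
      case True
      have "O0121 x v" using O0121I[of 0 v m x] h(6)[of v] v0 True by simp
      moreover have "d2 s v = None" using dW v0 True by auto
      ultimately show ?thesis by simp
    next
      case False
      have o1: "\<not> O0101 x v" using noO0101_sorted[OF h(1)] .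
      have o2: "\<not> O0102 x v" using noO0102_sorted[OF h(1)] .
      have o3: "\<not> O0121 x v" by (rule noO0121_bound) (use le False in fastforce)
      show ?thesis
      proof (cases "v \<le> Suc m")
        case True
        then have "v = m \<or> v = Suc m" using False by linarith
        then have "d2 s v \<noteq> None" using dW by auto
        then show ?thesis using True h(4) o1 o2 o3 by simp
      next
        case F: False
        then have "d2 s v = None" using dW v0 by auto
        then show ?thesis using F h(4) by simp
      qed
    qed
  qed
  have B: "I2 s' (x @ [v])" if "d2 s v = Some s'" for s'
  proof (cases "v = 0")
    case True
    then have s': "s' = F2" using that dW h(3) by (auto split: if_splits)
    have "\<forall>w. 0 < w \<and> w \<le> m \<longrightarrow> subseq [0,w,0] (x @ [0])"
    proof (intro allI impI)
      fix w assume w: "0 < w \<and> w \<le> m"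
      show "subseq [0,w,0] (x @ [0])"
      proof (cases "w < m")
        case True
        then have "subseq [0,w,m] x" using h(6)[of w] w by simp
        then have "subseq [0,w] x" by (rule conjunct1[OF sub3_sub2])
        then show ?thesis by simp
      next
        case False then have "w = m" using w by auto
        then show ?thesis using h(5) by simp
      qed
    qed
    then show ?thesis using s' True h(3) by auto
  next
    case v0: False
    have v: "v = m \<or> v = Suc m" "s' = W2 (v - 1)" using that dW v0 by (auto split: if_splits)
    have "\<forall>e\<in>set x. e \<le> v" using le v(1) le_SucI by blast
    then have "sorted (x @ [v])" using h(1) by (simp add: sorted_snoc_iff)
    moreover have "asc (x @ [v]) = v" using v(1) h(2,4) x by (auto simp: asc_snoc)
    moreover have "\<forall>w. 0 < w \<and> w < v \<longrightarrow> subseq [0,w,v] (x @ [v])"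
    proof (intro allI impI)
      fix w assume w: "0 < w \<and> w < v"
      show "subseq [0,w,v] (x @ [v])"
      proof (cases "w < m")
        case True
        then have "subseq [0,w,m] x" using h(6)[of w] w by simp
        then have "subseq [0,w] x" by (rule conjunct1[OF sub3_sub2])
        then show ?thesis by simp
      next
        case False then have "w = m" using w v(1) by auto
        then show ?thesis using h(5) by simp
      qed
    qed
    moreover have "subseq [0,v] (x @ [v])" using z0 by simp
    moreover have "Suc (v - 1) = v" using v(1) h(3) by auto
    ultimately show ?thesis using v(2) by simp
  qed
  have B': "\<forall>s'. d2 s v = Some s' \<longrightarrow> I2 s' (x @ [v])" using B by blast
  show ?thesis unfolding P2_simp using A B' by (rule conjI)
next
  case F2
  then obtain m where h: "1 \<le> m" "\<And>w. 0 < w \<Longrightarrow> w \<le> m \<Longrightarrow> subseq [0,w,0] x" using I by auto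
  have A: "(v \<le> Suc (asc x) \<and> \<not> O0101 x v \<and> \<not> O0102 x v \<and> \<not> O0121 x v) \<longleftrightarrow> d2 s v \<noteq> None"
  proof (cases "v = 0")
    case True
    have "d2 s v \<noteq> None" using True F2 by auto
    then show ?thesis using True noO0101_0 noO0102_le1[of 0] noO0121_0 by simp
  next
    case v0: False
    have "d2 s v = None" using F2 v0 by auto
    moreover have "O0101 x v \<or> O0102 x v"
    proof (cases "v \<le> m")
      case True
      then show ?thesis using O0101I[of 0 v x] h(2)[of v] v0 by simp
    next
      case False
      then show ?thesis using O0102I[of 0 m v x] h(2)[of m] h(1) by simp
    qed
    ultimately show ?thesis by auto
  qed
  have B: "I2 s' (x @ [v])" if "d2 s v = Some s'" for s'
  proof -
    have "s' = F2" using that F2 by (auto split: if_splits)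
    moreover have "\<forall>w. 0 < w \<and> w \<le> m \<longrightarrow> subseq [0,w,0] (x @ [v])" using h(2) by simp
    ultimately show ?thesis using h(1) by auto
  qed
  have B': "\<forall>s'. d2 s v = Some s' \<longrightarrow> I2 s' (x @ [v])" using B by blast
  show ?thesis unfolding P2_simp using A B' by (rule conjI)
qed

lemma C2_correct: "x \<noteq> [] \<Longrightarrow> (AVP P2 x \<longleftrightarrow> runst d2 S2start x \<noteq> None)"
proof -
  assume "x \<noteq> []"
  have "(AVP P2 x \<longleftrightarrow> runst d2 S2start x \<noteq> None) \<and> (\<forall>s. runst d2 S2start x = Some s \<longrightarrow> I2 s x)"
  proof (rule automaton_correct[where Inv = I2 and sI = Z2])
    show "\<forall>p\<in>P2. 2 \<le> length p" by simp
    show "\<And>v. d2 S2start v = (if v = 0 then Some Z2 else None)" by simp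
    show "I2 Z2 [0]" by simp
    show "\<And>s x v. x \<noteq> [] \<Longrightarrow> I2 s x \<Longrightarrow> AVP P2 x \<Longrightarrow>
      ((v \<le> Suc (asc x) \<and> (\<forall>p\<in>P2. \<not> newocc p x v)) \<longleftrightarrow> d2 s v \<noteq> None)
      \<and> (\<forall>s'. d2 s v = Some s' \<longrightarrow> I2 s' (x @ [v]))" using step2 by blast
    show "x \<noteq> []" by fact
  qed
  then show ?thesis by blast
qed

fun k2 :: "st2 \<Rightarrow> nat" where
  "k2 S2start = 0" | "k2 Z2 = 0" | "k2 (W2 m) = 1" | "k2 F2 = 2"

abbreviation "K2 n j \<equiv> card (Kset d2 S2start k2 n j)"

lemma L2_eq: "n \<ge> 1 \<Longrightarrow> Lset d2 S2start n = {x. AVP P2 x \<and> length x = n}"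
  by (rule Lset_AVP) (use C2_correct in auto)

lemma L2_fin: "n \<ge> 1 \<Longrightarrow> finite (Lset d2 S2start n)"
  using L2_eq finite_AVP by simp

lemma d2_nos0: "d2 s v \<noteq> Some S2start"
  by (cases s) auto

lemma d2_fin: "finite {v. d2 s v \<noteq> None}"
  by (rule finite_by_bound[where B = "case s of W2 m \<Rightarrow> Suc (Suc m) | _ \<Rightarrow> 2"])
     (cases s; auto split: if_splits)

lemma k2_rng: "s \<noteq> S2start \<Longrightarrow> k2 s < 3" by (cases s) auto

lemma c2_sets:
  "s \<noteq> S2start \<Longrightarrow> {v. \<exists>s'. d2 s v = Some s' \<and> k2 s' = j} =
    (case s of Z2 \<Rightarrow> (if j = 0 then {0} else if j = 1 then {1} else {})
     | W2 m \<Rightarrow> (if j = 1 then {Suc m, Suc (Suc m)} else if j = 2 then {0} else {})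
     | F2 \<Rightarrow> (if j = 2 then {0} else {})
     | S2start \<Rightarrow> {})"
  by (cases s) (auto split: if_splits)

lemma rec2:
  assumes "n \<ge> 1"
  shows "K2 (Suc n) 0 = K2 n 0"
    "K2 (Suc n) 1 = K2 n 0 + 2 * K2 n 1"
    "K2 (Suc n) 2 = K2 n 1 + K2 n 2"
proof -
  note cs = count_step[OF L2_fin[OF assms] assms d2_nos0 d2_fin _ k2_rng]
  have "K2 (Suc n) 0 = (\<Sum>i<3. (\<lambda>i. if i = 0 then 1 else 0) i * K2 n i)"
    by (rule cs) (auto simp: c2_sets split: st2.splits)
  then show "K2 (Suc n) 0 = K2 n 0" by (simp add: numeral_eq_Suc)
  have "K2 (Suc n) 1 = (\<Sum>i<3. (\<lambda>i. if i = 0 then 1 else if i = 1 then 2 else 0) i * K2 n i)"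
    by (rule cs) (auto simp: c2_sets split: st2.splits)
  then show "K2 (Suc n) 1 = K2 n 0 + 2 * K2 n 1" by (simp add: numeral_eq_Suc)
  have "K2 (Suc n) 2 = (\<Sum>i<3. (\<lambda>i. if i = 1 then 1 else if i = 2 then 1 else 0) i * K2 n i)"
    by (rule cs) (auto simp: c2_sets split: st2.splits)
  then show "K2 (Suc n) 2 = K2 n 1 + K2 n 2" by (simp add: numeral_eq_Suc)
qed

lemma base2: "K2 1 0 = 1" "K2 1 1 = 0" "K2 1 2 = 0"
  using Kset_one_card[of d2 S2start Z2 k2] by simp_all

lemma closed2:
  assumes "n \<ge> 1"
  shows "K2 n 0 = 1 \<and> K2 n 1 + 1 = 2 ^ (n - 1) \<and> K2 n 2 + n = 2 ^ (n - 1)"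
  using assms
proof (induction n rule: dec_induct)
  case base then show ?case using base2 by simp
next
  case (step n)
  note r = rec2[OF step.hyps(1)]
  have "1 \<le> n" by fact
  then obtain k where k: "n = Suc k" by (cases n) auto
  show ?case using step.IH r k by (auto simp: algebra_simps)
qed

theorem count2: "n \<ge> 1 \<Longrightarrow> a_count P2 n = 2 ^ n - n"
proof -
  assume n: "n \<ge> 1"
  have "a_count P2 n = card (Lset d2 S2start n)" using L2_eq[OF n] by (simp add: a_count_AVP)
  also have "\<dots> = (\<Sum>i<3. K2 n i)"
    by (rule count_total[OF L2_fin[OF n] n d2_nos0 k2_rng])
  also have "\<dots> = K2 n 0 + K2 n 1 + K2 n 2" by (simp add: numeral_eq_Suc)
  finally have "a_count P2 n + n = 2 ^ n" using closed2[OF n] n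
    by (cases n) (auto simp: algebra_simps)
  then show ?thesis by simp
qed

abbreviation "P1 \<equiv> {[0,1,0,1], [0,1,0,2], [0,1,2,0]} :: nat list set"

datatype st1 = S1start | Z1 | W1 nat | F1 nat

fun d1 :: "st1 \<Rightarrow> nat \<Rightarrow> st1 option" where
  "d1 S1start v = (if v = 0 then Some Z1 else None)"
| "d1 Z1 v = (if v = 0 then Some Z1 else if v = 1 then Some (W1 0) else None)"
| "d1 (W1 k) v = (if v = Suc k \<or> v = Suc (Suc k) then Some (W1 (v - 1)) else if v = k then Some (F1 k) else None)"
| "d1 (F1 d) v = (if v = d then Some (F1 d) else None)"

fun I1 :: "st1 \<Rightarrow> nat list \<Rightarrow> bool" where
  "I1 S1start x = False"
| "I1 Z1 x = (set x \<subseteq> {0} \<and> sorted x \<and> asc x = 0)"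
| "I1 (W1 k) x = (sorted x \<and> last x = Suc k \<and> asc x = Suc k
      \<and> (\<forall>u. u < Suc k \<longrightarrow> subseq [u,Suc k] x)
      \<and> (\<forall>u w. u < w \<and> w < Suc k \<longrightarrow> subseq [u,w,Suc k] x))"
| "I1 (F1 d) x = ((\<forall>e\<in>set x. e \<le> Suc d) \<and> subseq [d, Suc d, d] x
      \<and> (\<forall>u. u < d \<longrightarrow> subseq [u,d,Suc d] x)
      \<and> (\<forall>a. a < d \<longrightarrow> \<not> subseq [a,d,a] x)
      \<and> (\<forall>a b. a < b \<and> b < d \<longrightarrow> \<not> subseq [a,b,a] x))"

lemma P1_simp: "(\<forall>p\<in>P1. \<not> newocc p x v) \<longleftrightarrow> \<not> O0101 x v \<and> \<not> O0102 x v \<and> \<not> O0120 x v"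
proof -
  have "(\<forall>p\<in>P1. \<not> newocc p x v) \<longleftrightarrow>
    \<not> newocc [0,1,0,1] x v \<and> \<not> newocc [0,1,0,2] x v \<and> \<not> newocc [0,1,2,0] x v" by blast
  then show ?thesis unfolding no_O_iff .
qed

lemma step1:
  assumes x: "x \<noteq> []" and I: "I1 s x" and av: "AVP P1 x"
  shows "((v \<le> Suc (asc x) \<and> (\<forall>p\<in>P1. \<not> newocc p x v)) \<longleftrightarrow> d1 s v \<noteq> None)
     \<and> (\<forall>s'. d1 s v = Some s' \<longrightarrow> I1 s' (x @ [v]))"
proof (cases s)
  case S1start then show ?thesis using I by simp
next
  case Z1
  then have h: "set x \<subseteq> {0}" "sorted x" "asc x = 0" using I by auto
  have l: "last x = 0" using h(1) x last_in_set by blast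
  have z0: "0 \<in> set x" using l x last_in_set by metis
  have A: "(v \<le> Suc (asc x) \<and> \<not> O0101 x v \<and> \<not> O0102 x v \<and> \<not> O0120 x v) \<longleftrightarrow> d1 s v \<noteq> None"
  proof (cases "v \<le> 1")
    case True
    have o1: "\<not> O0101 x v" using noO0101_sorted[OF h(2)] .
    have o2: "\<not> O0102 x v" using noO0102_sorted[OF h(2)] .
    have o3: "\<not> O0120 x v" by (rule noO0120_bound) (use h(1) True in auto)
    have "d1 s v \<noteq> None" using True Z1 by auto
    then show ?thesis using o1 o2 o3 True h(3) by simp
  next
    case False
    then have "d1 s v = None" using Z1 by auto
    then show ?thesis using False h(3) by simp
  qed
  have B: "I1 s' (x @ [v])" if "d1 s v = Some s'" for s'
  proof (cases "v = 0")
    case True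
    then have "s' = Z1" using that Z1 by simp
    then show ?thesis using True h l x by (auto simp: asc_snoc sorted_snoc_iff)
  next
    case False
    then have v: "v = 1" "s' = W1 0" using that Z1 by (auto split: if_splits)
    have "sorted (x @ [v])" using h(1,2) v by (auto simp: sorted_snoc_iff)
    moreover have "asc (x @ [v]) = 1" using h(3) l x v by (simp add: asc_snoc)
    moreover have "\<forall>u. u < Suc 0 \<longrightarrow> subseq [u,Suc 0] (x @ [v])" using z0 v by simp
    moreover have "\<forall>u w. u < w \<and> w < Suc 0 \<longrightarrow> subseq [u,w,Suc 0] (x @ [v])" by auto
    ultimately show ?thesis using v by simp
  qed
  have B': "\<forall>s'. d1 s v = Some s' \<longrightarrow> I1 s' (x @ [v])" using B by blast
  show ?thesis unfolding P1_simp using A B' by (rule conjI)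
next
  case (W1 k)
  define m where "m = Suc k"
  have dW: "d1 s v = (if v = m \<or> v = Suc m then Some (W1 (v - 1)) else if v = k then Some (F1 k) else None)"
    using W1 by (simp add: m_def)
  have h: "sorted x" "last x = m" "asc x = m"
      "\<And>u. u < m \<Longrightarrow> subseq [u,m] x"
      "\<And>u w. u < w \<Longrightarrow> w < m \<Longrightarrow> subseq [u,w,m] x" using I W1 by (auto simp: m_def)
  have km: "k < m" by (simp add: m_def)
  have le: "\<And>e. e \<in> set x \<Longrightarrow> e \<le> m" using h(1,2) sorted_le_last by metis
  have mset: "m \<in> set x" using h(2) x last_in_set by metis
  have allin: "\<And>u. u \<le> m \<Longrightarrow> u \<in> set x"
  proof -
    fix u assume "u \<le> m"
    show "u \<in> set x"
    proof (cases "u < m")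
      case True then show ?thesis using sub2_set[OF h(4)[OF True]] by simp
    next
      case False then show ?thesis using mset \<open>u \<le> m\<close> by simp
    qed
  qed
  have A: "(v \<le> Suc (asc x) \<and> \<not> O0101 x v \<and> \<not> O0102 x v \<and> \<not> O0120 x v) \<longleftrightarrow> d1 s v \<noteq> None"
  proof (cases "v < k")
    case True
    have "O0120 x v" using O0120I[of v k m x] h(5)[of v k] True km by simp
    moreover have "d1 s v = None" using dW True km by auto
    ultimately show ?thesis by simp
  next
    case False
    have o1: "\<not> O0101 x v" using noO0101_sorted[OF h(1)] .
    have o2: "\<not> O0102 x v" using noO0102_sorted[OF h(1)] .
    have o3: "\<not> O0120 x v" by (rule noO0120_bound) (use le False m_def in fastforce)
    show ?thesis
    proof (cases "v \<le> Suc m")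
      case True
      then have "v = k \<or> v = m \<or> v = Suc m" using False m_def by linarith
      then have "d1 s v \<noteq> None" using dW by auto
      then show ?thesis using True h(3) o1 o2 o3 by simp
    next
      case F: False
      then have "d1 s v = None" using dW km by auto
      then show ?thesis using F h(3) by simp
    qed
  qed
  have B: "I1 s' (x @ [v])" if "d1 s v = Some s'" for s'
  proof (cases "v = k")
    case True
    then have s': "s' = F1 k" using that dW km by (auto split: if_splits)
    have "\<forall>e\<in>set (x @ [v]). e \<le> Suc k" using le True by (auto simp: m_def)
    moreover have "subseq [k, Suc k, k] (x @ [v])" using h(4)[OF km] True by (simp add: m_def)
    moreover have "\<forall>u. u < k \<longrightarrow> subseq [u,k,Suc k] (x @ [v])" using h(5) km by (simp add: m_def)
    moreover have "\<forall>a. a < k \<longrightarrow> \<not> subseq [a,k,a] (x @ [v])"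
    proof (intro allI impI)
      fix a assume a: "a < k"
      show "\<not> subseq [a,k,a] (x @ [v])"
      proof
        assume "subseq [a,k,a] (x @ [v])"
        then have "subseq [a,k,a] x" using a True by auto
        then show False using sub3_sorted[OF _ h(1)] a by fastforce
      qed
    qed
    moreover have "\<forall>a b. a < b \<and> b < k \<longrightarrow> \<not> subseq [a,b,a] (x @ [v])"
    proof (intro allI impI)
      fix a b assume ab: "a < b \<and> b < k"
      show "\<not> subseq [a,b,a] (x @ [v])"
      proof
        assume "subseq [a,b,a] (x @ [v])"
        then have "subseq [a,b,a] x" using ab True by auto
        then show False using sub3_sorted[OF _ h(1)] ab by fastforce
      qed
    qed
    ultimately show ?thesis using s' True by simp
  next
    case vk: False
    have v: "v = m \<or> v = Suc m" "s' = W1 (v - 1)" using that dW vk by (auto split: if_splits)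
    have sv: "Suc (v - 1) = v" using v(1) by (auto simp: m_def)
    have "\<forall>e\<in>set x. e \<le> v" using le v(1) le_SucI by blast
    then have "sorted (x @ [v])" using h(1) by (simp add: sorted_snoc_iff)
    moreover have "asc (x @ [v]) = v" using v(1) h(2,3) x by (auto simp: asc_snoc)
    moreover have "\<forall>u. u < v \<longrightarrow> subseq [u,v] (x @ [v])"
      using allin v(1) by auto
    moreover have "\<forall>u w. u < w \<and> w < v \<longrightarrow> subseq [u,w,v] (x @ [v])"
    proof (intro allI impI)
      fix u w assume w: "u < w \<and> w < v"
      show "subseq [u,w,v] (x @ [v])"
      proof (cases "w < m")
        case True
        then have "subseq [u,w,m] x" using h(5)[of u w] w by simp
        then have "subseq [u,w] x" by (rule conjunct1[OF sub3_sub2])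
        then show ?thesis by simp
      next
        case False then have "w = m" using w v(1) by auto
        then show ?thesis using h(4)[of u] w by simp
      qed
    qed
    ultimately show ?thesis using v(2) sv by simp
  qed
  have B': "\<forall>s'. d1 s v = Some s' \<longrightarrow> I1 s' (x @ [v])" using B by blast
  show ?thesis unfolding P1_simp using A B' by (rule conjI)
next
  case (F1 d)
  then have h: "\<And>e. e \<in> set x \<Longrightarrow> e \<le> Suc d" "subseq [d, Suc d, d] x"
      "\<And>u. u < d \<Longrightarrow> subseq [u,d,Suc d] x"
      "\<And>a. a < d \<Longrightarrow> \<not> subseq [a,d,a] x"
      "\<And>a b. a < b \<Longrightarrow> b < d \<Longrightarrow> \<not> subseq [a,b,a] x" using I by auto
  have dset: "d \<in> set x" using sub3_set[OF h(2)] by simp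
  have dasc: "d \<le> asc x" using ascent_seq_elems[OF _ dset] av by (simp add: AVP_def)
  have A: "(v \<le> Suc (asc x) \<and> \<not> O0101 x v \<and> \<not> O0102 x v \<and> \<not> O0120 x v) \<longleftrightarrow> d1 s v \<noteq> None"
  proof (cases "v = d")
    case True
    have o1: "\<not> O0101 x v" unfolding O0101_def using h(4) True by blast
    have o2: "\<not> O0102 x v" unfolding O0102_def using h(5) True by blast
    have o3: "\<not> O0120 x v" by (rule noO0120_bound) (use h(1) True in auto)
    have "d1 s v \<noteq> None" using True F1 by auto
    then show ?thesis using o1 o2 o3 True dasc by simp
  next
    case vd: False
    have "d1 s v = None" using F1 vd by auto
    moreover have "O0120 x v \<or> O0101 x v \<or> O0102 x v"
    proof (cases "v < d")
      case True
      then show ?thesis using O0120I[of v d "Suc d" x] h(3)[OF True] by simp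
    next
      case False
      show ?thesis
      proof (cases "v = Suc d")
        case True
        then show ?thesis using O0101I[of d v x] h(2) by simp
      next
        case False
        then have "Suc d < v" using vd \<open>\<not> v < d\<close> by linarith
        then show ?thesis using O0102I[of d "Suc d" v x] h(2) by simp
      qed
    qed
    ultimately show ?thesis by auto
  qed
  have B: "I1 s' (x @ [v])" if "d1 s v = Some s'" for s'
  proof -
    have v: "v = d" "s' = F1 d" using that F1 by (auto split: if_splits)
    have "\<forall>e\<in>set (x @ [v]). e \<le> Suc d" using h(1) v by auto
    moreover have "subseq [d, Suc d, d] (x @ [v])" using h(2) by simp
    moreover have "\<forall>u. u < d \<longrightarrow> subseq [u,d,Suc d] (x @ [v])" using h(3) by simp
    moreover have "\<forall>a. a < d \<longrightarrow> \<not> subseq [a,d,a] (x @ [v])" using h(4) v by auto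
    moreover have "\<forall>a b. a < b \<and> b < d \<longrightarrow> \<not> subseq [a,b,a] (x @ [v])" using h(5) v by auto
    ultimately show ?thesis using v by simp
  qed
  have B': "\<forall>s'. d1 s v = Some s' \<longrightarrow> I1 s' (x @ [v])" using B by blast
  show ?thesis unfolding P1_simp using A B' by (rule conjI)
qed

lemma C1_correct: "x \<noteq> [] \<Longrightarrow> (AVP P1 x \<longleftrightarrow> runst d1 S1start x \<noteq> None)"
proof -
  assume "x \<noteq> []"
  have "(AVP P1 x \<longleftrightarrow> runst d1 S1start x \<noteq> None) \<and> (\<forall>s. runst d1 S1start x = Some s \<longrightarrow> I1 s x)"
  proof (rule automaton_correct[where Inv = I1 and sI = Z1])
    show "\<forall>p\<in>P1. 2 \<le> length p" by simp
    show "\<And>v. d1 S1start v = (if v = 0 then Some Z1 else None)" by simp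
    show "I1 Z1 [0]" by simp
    show "\<And>s x v. x \<noteq> [] \<Longrightarrow> I1 s x \<Longrightarrow> AVP P1 x \<Longrightarrow>
      ((v \<le> Suc (asc x) \<and> (\<forall>p\<in>P1. \<not> newocc p x v)) \<longleftrightarrow> d1 s v \<noteq> None)
      \<and> (\<forall>s'. d1 s v = Some s' \<longrightarrow> I1 s' (x @ [v]))" using step1 by blast
    show "x \<noteq> []" by fact
  qed
  then show ?thesis by blast
qed

fun k1 :: "st1 \<Rightarrow> nat" where
  "k1 S1start = 0" | "k1 Z1 = 0" | "k1 (W1 m) = 1" | "k1 (F1 d) = 2"

abbreviation "K1 n j \<equiv> card (Kset d1 S1start k1 n j)"

lemma L1_eq: "n \<ge> 1 \<Longrightarrow> Lset d1 S1start n = {x. AVP P1 x \<and> length x = n}"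
  by (rule Lset_AVP) (use C1_correct in auto)

lemma L1_fin: "n \<ge> 1 \<Longrightarrow> finite (Lset d1 S1start n)"
  using L1_eq finite_AVP by simp

lemma d1_nos0: "d1 s v \<noteq> Some S1start"
  by (cases s) auto

lemma d1_fin: "finite {v. d1 s v \<noteq> None}"
  by (rule finite_by_bound[where B = "case s of W1 m \<Rightarrow> Suc (Suc m) | F1 d \<Rightarrow> d | _ \<Rightarrow> 2"])
     (cases s; auto split: if_splits)

lemma k1_rng: "s \<noteq> S1start \<Longrightarrow> k1 s < 3" by (cases s) auto

lemma c1_sets:
  "s \<noteq> S1start \<Longrightarrow> {v. \<exists>s'. d1 s v = Some s' \<and> k1 s' = j} =
    (case s of Z1 \<Rightarrow> (if j = 0 then {0} else if j = 1 then {1} else {})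
     | W1 m \<Rightarrow> (if j = 1 then {Suc m, Suc (Suc m)} else if j = 2 then {m} else {})
     | F1 d \<Rightarrow> (if j = 2 then {d} else {})
     | S1start \<Rightarrow> {})"
  by (cases s) (auto split: if_splits)

lemma rec1:
  assumes "n \<ge> 1"
  shows "K1 (Suc n) 0 = K1 n 0"
    "K1 (Suc n) 1 = K1 n 0 + 2 * K1 n 1"
    "K1 (Suc n) 2 = K1 n 1 + K1 n 2"
proof -
  note cs = count_step[OF L1_fin[OF assms] assms d1_nos0 d1_fin _ k1_rng]
  have "K1 (Suc n) 0 = (\<Sum>i<3. (\<lambda>i. if i = 0 then 1 else 0) i * K1 n i)"
    by (rule cs) (auto simp: c1_sets split: st1.splits)
  then show "K1 (Suc n) 0 = K1 n 0" by (simp add: numeral_eq_Suc)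
  have "K1 (Suc n) 1 = (\<Sum>i<3. (\<lambda>i. if i = 0 then 1 else if i = 1 then 2 else 0) i * K1 n i)"
    by (rule cs) (auto simp: c1_sets split: st1.splits)
  then show "K1 (Suc n) 1 = K1 n 0 + 2 * K1 n 1" by (simp add: numeral_eq_Suc)
  have "K1 (Suc n) 2 = (\<Sum>i<3. (\<lambda>i. if i = 1 then 1 else if i = 2 then 1 else 0) i * K1 n i)"
    by (rule cs) (auto simp: c1_sets split: st1.splits)
  then show "K1 (Suc n) 2 = K1 n 1 + K1 n 2" by (simp add: numeral_eq_Suc)
qed

lemma base1: "K1 1 0 = 1" "K1 1 1 = 0" "K1 1 2 = 0"
  using Kset_one_card[of d1 S1start Z1 k1] by simp_all

lemma closed1:
  assumes "n \<ge> 1"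
  shows "K1 n 0 = 1 \<and> K1 n 1 + 1 = 2 ^ (n - 1) \<and> K1 n 2 + n = 2 ^ (n - 1)"
  using assms
proof (induction n rule: dec_induct)
  case base then show ?case using base1 by simp
next
  case (step n)
  note r = rec1[OF step.hyps(1)]
  have "1 \<le> n" by fact
  then obtain k where k: "n = Suc k" by (cases n) auto
  show ?case using step.IH r k by (auto simp: algebra_simps)
qed

theorem count1: "n \<ge> 1 \<Longrightarrow> a_count P1 n = 2 ^ n - n"
proof -
  assume n: "n \<ge> 1"
  have "a_count P1 n = card (Lset d1 S1start n)" using L1_eq[OF n] by (simp add: a_count_AVP)
  also have "\<dots> = (\<Sum>i<3. K1 n i)"
    by (rule count_total[OF L1_fin[OF n] n d1_nos0 k1_rng])
  also have "\<dots> = K1 n 0 + K1 n 1 + K1 n 2" by (simp add: numeral_eq_Suc)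
  finally have "a_count P1 n + n = 2 ^ n" using closed1[OF n] n
    by (cases n) (auto simp: algebra_simps)
  then show ?thesis by simp
qed

abbreviation "P4 \<equiv> {[0,1,0,1], [0,1,2,0], [0,1,2,1]} :: nat list set"

datatype st4 = S4start | Z4 | W4 nat | B4 | U4 nat

fun d4 :: "st4 \<Rightarrow> nat \<Rightarrow> st4 option" where
  "d4 S4start v = (if v = 0 then Some Z4 else None)"
| "d4 Z4 v = (if v = 0 then Some Z4 else if v = 1 then Some (W4 0) else None)"
| "d4 (W4 k) v = (if v = Suc k \<or> v = Suc (Suc k) then Some (W4 (v - 1))
     else if v = 0 \<and> k = 0 then Some B4 else None)"
| "d4 B4 v = (if v = 0 then Some B4 else if v = 2 then Some (U4 0) else None)"
| "d4 (U4 k) v = (if v = Suc (Suc k) \<or> v = Suc (Suc (Suc k)) then Some (U4 (v - 2)) else None)"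

fun I4 :: "st4 \<Rightarrow> nat list \<Rightarrow> bool" where
  "I4 S4start x = False"
| "I4 Z4 x = (set x \<subseteq> {0} \<and> sorted x \<and> asc x = 0)"
| "I4 (W4 k) x = (sorted x \<and> last x = Suc k \<and> asc x = Suc k \<and> subseq [0,Suc k] x
      \<and> (\<forall>w. 0 < w \<and> w < Suc k \<longrightarrow> subseq [0,w,Suc k] x))"
| "I4 B4 x = (set x \<subseteq> {0,1} \<and> subseq [0,1,0] x \<and> last x = 0 \<and> asc x = 1)"
| "I4 (U4 k) x = (last x = Suc (Suc k) \<and> asc x = Suc (Suc k) \<and> (\<forall>e\<in>set x. e \<le> Suc (Suc k))
      \<and> subseq [0,1,Suc (Suc k)] x \<and> (\<forall>w. 1 < w \<and> w < Suc (Suc k) \<longrightarrow> subseq [0,w,Suc (Suc k)] x)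
      \<and> (\<forall>a. a < Suc (Suc k) \<longrightarrow> \<not> subseq [a,Suc (Suc k),a] x))"

lemma P4_simp: "(\<forall>p\<in>P4. \<not> newocc p x v) \<longleftrightarrow> \<not> O0101 x v \<and> \<not> O0120 x v \<and> \<not> O0121 x v"
proof -
  have "(\<forall>p\<in>P4. \<not> newocc p x v) \<longleftrightarrow>
    \<not> newocc [0,1,0,1] x v \<and> \<not> newocc [0,1,2,0] x v \<and> \<not> newocc [0,1,2,1] x v" by blast
  then show ?thesis unfolding no_O_iff .
qed

lemma step4:
  assumes x: "x \<noteq> []" and I: "I4 s x"
  shows "((v \<le> Suc (asc x) \<and> (\<forall>p\<in>P4. \<not> newocc p x v)) \<longleftrightarrow> d4 s v \<noteq> None)
     \<and> (\<forall>s'. d4 s v = Some s' \<longrightarrow> I4 s' (x @ [v]))"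
proof (cases s)
  case S4start then show ?thesis using I by simp
next
  case Z4
  then have h: "set x \<subseteq> {0}" "sorted x" "asc x = 0" using I by auto
  have l: "last x = 0" using h(1) x last_in_set by blast
  have z0: "0 \<in> set x" using l x last_in_set by metis
  have A: "(v \<le> Suc (asc x) \<and> \<not> O0101 x v \<and> \<not> O0120 x v \<and> \<not> O0121 x v) \<longleftrightarrow> d4 s v \<noteq> None"
  proof (cases "v \<le> 1")
    case True
    have o1: "\<not> O0101 x v" using noO0101_sorted[OF h(2)] .
    have o2: "\<not> O0120 x v" by (rule noO0120_bound) (use h(1) True in auto)
    have o3: "\<not> O0121 x v" by (rule noO0121_bound) (use h(1) True in auto)
    have "d4 s v \<noteq> None" using True Z4 by auto
    then show ?thesis using o1 o2 o3 True h(3) by simp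
  next
    case False
    then have "d4 s v = None" using Z4 by auto
    then show ?thesis using False h(3) by simp
  qed
  have B: "I4 s' (x @ [v])" if "d4 s v = Some s'" for s'
  proof (cases "v = 0")
    case True
    then have "s' = Z4" using that Z4 by simp
    then show ?thesis using True h l x by (auto simp: asc_snoc sorted_snoc_iff)
  next
    case False
    then have v: "v = 1" "s' = W4 0" using that Z4 by (auto split: if_splits)
    have "sorted (x @ [v])" using h(1,2) v by (auto simp: sorted_snoc_iff)
    moreover have "asc (x @ [v]) = 1" using h(3) l x v by (simp add: asc_snoc)
    moreover have "subseq [0,1] (x @ [v])" using z0 v by simp
    moreover have "\<forall>w. 0 < w \<and> w < (1::nat) \<longrightarrow> subseq [0,w,1] (x @ [v])" by auto
    ultimately show ?thesis using v by simp
  qed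
  have B': "\<forall>s'. d4 s v = Some s' \<longrightarrow> I4 s' (x @ [v])" using B by blast
  show ?thesis unfolding P4_simp using A B' by (rule conjI)
next
  case (W4 k)
  define m where "m = Suc k"
  have dW: "d4 s v = (if v = m \<or> v = Suc m then Some (W4 (v - 1)) else if v = 0 \<and> m = 1 then Some B4 else None)"
    using W4 by (simp add: m_def)
  have h: "sorted x" "last x = m" "1 \<le> m" "asc x = m" "subseq [0,m] x"
      "\<And>w. 0 < w \<Longrightarrow> w < m \<Longrightarrow> subseq [0,w,m] x" using I W4 by (auto simp: m_def)
  have le: "\<And>e. e \<in> set x \<Longrightarrow> e \<le> m" using h(1,2) sorted_le_last by metis
  have z0: "0 \<in> set x" using sub2_set[OF h(5)] by simp
  have A: "(v \<le> Suc (asc x) \<and> \<not> O0101 x v \<and> \<not> O0120 x v \<and> \<not> O0121 x v) \<longleftrightarrow> d4 s v \<noteq> None"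
  proof (cases "v < m")
    case True
    show ?thesis
    proof (cases "m = 1")
      case m1: True
      then have v0: "v = 0" using True by simp
      have o1: "\<not> O0101 x v" using v0 noO0101_0 by simp
      have o2: "\<not> O0120 x v" by (rule noO0120_bound) (use le m1 v0 in auto)
      have o3: "\<not> O0121 x v" using v0 noO0121_0 by simp
      have "d4 s v \<noteq> None" using dW v0 m1 by simp
      then show ?thesis using o1 o2 o3 v0 by simp
    next
      case m1: False
      have "O0120 x v \<or> O0121 x v"
      proof (cases "v = 0")
        case True
        then show ?thesis using O0120I[of v 1 m x] h(3) h(6)[of 1] m1 by simp
      next
        case False
        then show ?thesis using O0121I[of 0 v m x] h(6)[of v] \<open>v < m\<close> by simp
      qed
      moreover have "d4 s v = None" using dW m1 True by auto
      ultimately show ?thesis by auto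
    qed
  next
    case False
    have o1: "\<not> O0101 x v" using noO0101_sorted[OF h(1)] .
    have o2: "\<not> O0120 x v" by (rule noO0120_bound) (use le False in fastforce)
    have o3: "\<not> O0121 x v" by (rule noO0121_bound) (use le False in fastforce)
    show ?thesis
    proof (cases "v \<le> Suc m")
      case True
      then have "v = m \<or> v = Suc m" using False by linarith
      then have "d4 s v \<noteq> None" using dW by auto
      then show ?thesis using True h(4) o1 o2 o3 by simp
    next
      case F: False
      then have "d4 s v = None" using dW h(3) by auto
      then show ?thesis using F h(4) by simp
    qed
  qed
  have B: "I4 s' (x @ [v])" if "d4 s v = Some s'" for s'
  proof (cases "v = 0")
    case True
    then have s': "s' = B4" "m = 1" using that dW h(3) by (auto split: if_splits)
    have "set (x @ [v]) \<subseteq> {0,1}" using le s'(2) True by fastforce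
    moreover have "subseq [0,1,0] (x @ [v])" using h(5) s'(2) True by simp
    moreover have "asc (x @ [v]) = 1" using h(2,4) s'(2) True x by (simp add: asc_snoc)
    ultimately show ?thesis using s'(1) True by simp
  next
    case v0: False
    have v: "v = m \<or> v = Suc m" "s' = W4 (v - 1)" using that dW v0 by (auto split: if_splits)
    have "\<forall>e\<in>set x. e \<le> v" using le v(1) le_SucI by blast
    then have "sorted (x @ [v])" using h(1) by (simp add: sorted_snoc_iff)
    moreover have "asc (x @ [v]) = v" using v(1) h(2,4) x by (auto simp: asc_snoc)
    moreover have "\<forall>w. 0 < w \<and> w < v \<longrightarrow> subseq [0,w,v] (x @ [v])"
    proof (intro allI impI)
      fix w assume w: "0 < w \<and> w < v"
      show "subseq [0,w,v] (x @ [v])"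
      proof (cases "w < m")
        case True
        then have "subseq [0,w,m] x" using h(6)[of w] w by simp
        then have "subseq [0,w] x" by (rule conjunct1[OF sub3_sub2])
        then show ?thesis by simp
      next
        case False then have "w = m" using w v(1) by auto
        then show ?thesis using h(5) by simp
      qed
    qed
    moreover have "subseq [0,v] (x @ [v])" using z0 by simp
    moreover have "Suc (v - 1) = v" using v(1) h(3) by auto
    ultimately show ?thesis using v(2) by simp
  qed
  have B': "\<forall>s'. d4 s v = Some s' \<longrightarrow> I4 s' (x @ [v])" using B by blast
  show ?thesis unfolding P4_simp using A B' by (rule conjI)
next
  case B4
  then have h: "set x \<subseteq> {0,1}" "subseq [0,1,0] x" "last x = 0" "asc x = 1" using I by auto
  have le1: "\<And>e. e \<in> set x \<Longrightarrow> e \<le> 1" using h(1) by auto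
  have A: "(v \<le> Suc (asc x) \<and> \<not> O0101 x v \<and> \<not> O0120 x v \<and> \<not> O0121 x v) \<longleftrightarrow> d4 s v \<noteq> None"
  proof (cases "v = 0")
    case True
    have o2: "\<not> O0120 x v" by (rule noO0120_bound) (use le1 True in auto)
    have "d4 s v \<noteq> None" using True B4 by simp
    then show ?thesis using o2 True noO0101_0 noO0121_0 by simp
  next
    case v0: False
    show ?thesis
    proof (cases "v = 1")
      case True
      then have "O0101 x v" using O0101I[of 0 1 x] h(2) by simp
      moreover have "d4 s v = None" using True B4 by simp
      ultimately show ?thesis by simp
    next
      case v1: False
      show ?thesis
      proof (cases "v = 2")
        case True
        have ns: "v \<notin> set x" using le1 True by fastforce
        have "d4 s v \<noteq> None" using True B4 by simp
        then show ?thesis using noO0101_notin[OF ns] noO0120_notin[OF ns] noO0121_notin[OF ns] True h(4) by simp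
      next
        case False
        then have "d4 s v = None" using B4 v0 v1 by simp
        moreover have "\<not> v \<le> Suc (asc x)" using h(4) v0 v1 False by simp
        ultimately show ?thesis by simp
      qed
    qed
  qed
  have B: "I4 s' (x @ [v])" if "d4 s v = Some s'" for s'
  proof (cases "v = 0")
    case True
    then have "s' = B4" using that B4 by simp
    then show ?thesis using True h x by (auto simp: asc_snoc)
  next
    case False
    then have v: "v = 2" "s' = U4 0" using that B4 by (auto split: if_splits)
    have ns: "v \<notin> set x" using le1 v by fastforce
    have "asc (x @ [v]) = 2" using h(3,4) x v by (simp add: asc_snoc)
    moreover have "\<forall>e\<in>set (x @ [v]). e \<le> 2" using le1 v by fastforce
    moreover have "subseq [0,1,2] (x @ [v])" using conjunct1[OF sub3_sub2[OF h(2)]] v by simp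
    moreover have "\<forall>w. 1 < w \<and> w < (2::nat) \<longrightarrow> subseq [0,w,2] (x @ [v])" by auto
    moreover have "\<forall>a. a < 2 \<longrightarrow> \<not> subseq [a,2,a] (x @ [v])"
    proof (intro allI impI notI)
      fix a assume a: "a < 2" "subseq [a,2,a] (x @ [v])"
      then have "subseq [a,2,a] x \<or> subseq [a,2] x" using v by auto
      then have "2 \<in> set x"
      proof
        assume "subseq [a,2,a] x" from sub3_set[OF this] show ?thesis by simp
      next
        assume "subseq [a,2] x" from sub2_set[OF this] show ?thesis by simp
      qed
      then show False using ns v by simp
    qed
    ultimately show ?thesis using v by (simp add: numeral_eq_Suc)
  qed
  have B': "\<forall>s'. d4 s v = Some s' \<longrightarrow> I4 s' (x @ [v])" using B by blast
  show ?thesis unfolding P4_simp using A B' by (rule conjI)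
next
  case (U4 k)
  define m where "m = Suc (Suc k)"
  have dU: "d4 s v = (if v = m \<or> v = Suc m then Some (U4 (v - 2)) else None)"
    using U4 by (simp add: m_def)
  have h: "last x = m" "asc x = m" "\<And>e. e \<in> set x \<Longrightarrow> e \<le> m" "subseq [0,1,m] x"
      "\<And>w. 1 < w \<Longrightarrow> w < m \<Longrightarrow> subseq [0,w,m] x"
      "\<And>a. a < m \<Longrightarrow> \<not> subseq [a,m,a] x" using I U4 by (auto simp: m_def)
  have m2: "2 \<le> m" by (simp add: m_def)
  have z0: "0 \<in> set x" using sub3_set[OF h(4)] by simp
  have A: "(v \<le> Suc (asc x) \<and> \<not> O0101 x v \<and> \<not> O0120 x v \<and> \<not> O0121 x v) \<longleftrightarrow> d4 s v \<noteq> None"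
  proof (cases "v < m")
    case True
    have "O0120 x v \<or> O0121 x v"
    proof (cases "v = 0")
      case True
      then show ?thesis using O0120I[of v 1 m x] h(4) m2 by simp
    next
      case v0: False
      show ?thesis
      proof (cases "v = 1")
        case True
        then show ?thesis using O0121I[of 0 v m x] h(4) m2 by simp
      next
        case False
        then show ?thesis using O0121I[of 0 v m x] h(5)[of v] v0 \<open>v < m\<close> by simp
      qed
    qed
    moreover have "d4 s v = None" using dU True by auto
    ultimately show ?thesis by auto
  next
    case False
    have o1: "\<not> O0101 x v"
    proof (cases "v = m")
      case True
      show ?thesis unfolding O0101_def using h(6) True by blast
    next
      case F: False
      have "v \<notin> set x" using h(3) False F by fastforce
      then show ?thesis by (rule noO0101_notin)
    qed
    have o2: "\<not> O0120 x v" by (rule noO0120_bound) (use h(3) False in fastforce)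
    have o3: "\<not> O0121 x v" by (rule noO0121_bound) (use h(3) False in fastforce)
    show ?thesis
    proof (cases "v \<le> Suc m")
      case True
      then have "v = m \<or> v = Suc m" using False by linarith
      then have "d4 s v \<noteq> None" using dU by auto
      then show ?thesis using True h(2) o1 o2 o3 by simp
    next
      case F: False
      then have "d4 s v = None" using dU m2 by auto
      then show ?thesis using F h(2) by simp
    qed
  qed
  have B: "I4 s' (x @ [v])" if "d4 s v = Some s'" for s'
  proof -
    have v: "v = m \<or> v = Suc m" "s' = U4 (v - 2)" using that dU by (auto split: if_splits)
    have sv: "Suc (Suc (v - 2)) = v" using v(1) m2 by auto
    have "asc (x @ [v]) = v" using v(1) h(1,2) x by (auto simp: asc_snoc)
    moreover have "\<forall>e\<in>set (x @ [v]). e \<le> v" using h(3) v(1) le_SucI by fastforce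
    moreover have "subseq [0,1,v] (x @ [v])" using conjunct1[OF sub3_sub2[OF h(4)]] by simp
    moreover have "\<forall>w. 1 < w \<and> w < v \<longrightarrow> subseq [0,w,v] (x @ [v])"
    proof (intro allI impI)
      fix w assume w: "1 < w \<and> w < v"
      show "subseq [0,w,v] (x @ [v])"
      proof (cases "w < m")
        case True
        then have "subseq [0,w,m] x" using h(5)[of w] w by simp
        then have "subseq [0,w] x" by (rule conjunct1[OF sub3_sub2])
        then show ?thesis by simp
      next
        case False then have "w = m" using w v(1) by auto
        then show ?thesis using conjunct1[OF conjunct2[OF sub3_sub2[OF h(4)]]] by simp
      qed
    qed
    moreover have "\<forall>a. a < v \<longrightarrow> \<not> subseq [a,v,a] (x @ [v])"
    proof (intro allI impI notI)
      fix a assume a: "a < v" "subseq [a,v,a] (x @ [v])"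
      then have sa: "subseq [a,v,a] x" by auto
      show False
      proof (cases "v = m")
        case True then show False using h(6)[of a] a sa by simp
      next
        case False
        then have "v \<notin> set x" using h(3) v(1) by fastforce
        then show False using sub3_set[OF sa] by simp
      qed
    qed
    ultimately show ?thesis using v(2) sv h(1) by simp
  qed
  have B': "\<forall>s'. d4 s v = Some s' \<longrightarrow> I4 s' (x @ [v])" using B by blast
  show ?thesis unfolding P4_simp using A B' by (rule conjI)
qed

lemma C4_correct: "x \<noteq> [] \<Longrightarrow> (AVP P4 x \<longleftrightarrow> runst d4 S4start x \<noteq> None)"
proof -
  assume "x \<noteq> []"
  have "(AVP P4 x \<longleftrightarrow> runst d4 S4start x \<noteq> None) \<and> (\<forall>s. runst d4 S4start x = Some s \<longrightarrow> I4 s x)"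
  proof (rule automaton_correct[where Inv = I4 and sI = Z4])
    show "\<forall>p\<in>P4. 2 \<le> length p" by simp
    show "\<And>v. d4 S4start v = (if v = 0 then Some Z4 else None)" by simp
    show "I4 Z4 [0]" by simp
    show "\<And>s x v. x \<noteq> [] \<Longrightarrow> I4 s x \<Longrightarrow> AVP P4 x \<Longrightarrow>
      ((v \<le> Suc (asc x) \<and> (\<forall>p\<in>P4. \<not> newocc p x v)) \<longleftrightarrow> d4 s v \<noteq> None)
      \<and> (\<forall>s'. d4 s v = Some s' \<longrightarrow> I4 s' (x @ [v]))" using step4 by blast
    show "x \<noteq> []" by fact
  qed
  then show ?thesis by blast
qed

fun k4 :: "st4 \<Rightarrow> nat" where
  "k4 S4start = 0" | "k4 Z4 = 0" | "k4 (W4 k) = (if k = 0 then 1 else 2)" | "k4 B4 = 3" | "k4 (U4 k) = 4"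

abbreviation "K4 n j \<equiv> card (Kset d4 S4start k4 n j)"

lemma L4_eq: "n \<ge> 1 \<Longrightarrow> Lset d4 S4start n = {x. AVP P4 x \<and> length x = n}"
  by (rule Lset_AVP) (use C4_correct in auto)

lemma L4_fin: "n \<ge> 1 \<Longrightarrow> finite (Lset d4 S4start n)"
  using L4_eq finite_AVP by simp

lemma d4_nos0: "d4 s v \<noteq> Some S4start"
  by (cases s) auto

lemma d4_fin: "finite {v. d4 s v \<noteq> None}"
  by (rule finite_by_bound[where B = "case s of W4 m \<Rightarrow> Suc (Suc m) | U4 k \<Rightarrow> Suc (Suc (Suc k)) | _ \<Rightarrow> 2"])
     (cases s; auto split: if_splits)

lemma k4_rng: "s \<noteq> S4start \<Longrightarrow> k4 s < 5" by (cases s) auto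

lemma c4_sets:
  "s \<noteq> S4start \<Longrightarrow> {v. \<exists>s'. d4 s v = Some s' \<and> k4 s' = j} =
    (case s of Z4 \<Rightarrow> (if j = 0 then {0} else if j = 1 then {1} else {})
     | W4 k \<Rightarrow> (if k = 0 then (if j = 1 then {1} else if j = 2 then {2} else if j = 3 then {0} else {})
                else (if j = 2 then {Suc k, Suc (Suc k)} else {}))
     | B4 \<Rightarrow> (if j = 3 then {0} else if j = 4 then {2} else {})
     | U4 k \<Rightarrow> (if j = 4 then {Suc (Suc k), Suc (Suc (Suc k))} else {})
     | S4start \<Rightarrow> {})"
  by (cases s) (auto split: if_splits)

lemma rec4:
  assumes "n \<ge> 1"
  shows "K4 (Suc n) 0 = K4 n 0"
    "K4 (Suc n) 1 = K4 n 0 + K4 n 1"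
    "K4 (Suc n) 2 = K4 n 1 + 2 * K4 n 2"
    "K4 (Suc n) 3 = K4 n 1 + K4 n 3"
    "K4 (Suc n) 4 = K4 n 3 + 2 * K4 n 4"
proof -
  note cs = count_step[OF L4_fin[OF assms] assms d4_nos0 d4_fin _ k4_rng]
  have "K4 (Suc n) 0 = (\<Sum>i<5. (\<lambda>i. if i = 0 then 1 else 0) i * K4 n i)"
    by (rule cs) (auto simp: c4_sets split: st4.splits)
  then show "K4 (Suc n) 0 = K4 n 0" by (simp add: numeral_eq_Suc)
  have "K4 (Suc n) 1 = (\<Sum>i<5. (\<lambda>i. if i \<le> 1 then 1 else 0) i * K4 n i)"
    by (rule cs) (auto simp: c4_sets split: st4.splits)
  then show "K4 (Suc n) 1 = K4 n 0 + K4 n 1" by (simp add: numeral_eq_Suc)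
  have "K4 (Suc n) 2 = (\<Sum>i<5. (\<lambda>i. if i = 1 then 1 else if i = 2 then 2 else 0) i * K4 n i)"
    by (rule cs) (auto simp: c4_sets split: st4.splits)
  then show "K4 (Suc n) 2 = K4 n 1 + 2 * K4 n 2" by (simp add: numeral_eq_Suc)
  have "K4 (Suc n) 3 = (\<Sum>i<5. (\<lambda>i. if i = 1 then 1 else if i = 3 then 1 else 0) i * K4 n i)"
    by (rule cs) (auto simp: c4_sets split: st4.splits)
  then show "K4 (Suc n) 3 = K4 n 1 + K4 n 3" by (simp add: numeral_eq_Suc)
  have "K4 (Suc n) 4 = (\<Sum>i<5. (\<lambda>i. if i = 3 then 1 else if i = 4 then 2 else 0) i * K4 n i)"
    by (rule cs) (auto simp: c4_sets split: st4.splits)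
  then show "K4 (Suc n) 4 = K4 n 3 + 2 * K4 n 4" by (simp add: numeral_eq_Suc)
qed

lemma base4: "K4 1 0 = 1" "K4 1 1 = 0" "K4 1 2 = 0" "K4 1 3 = 0" "K4 1 4 = 0"
  using Kset_one_card[of d4 S4start Z4 k4] by simp_all

lemma closed4:
  "K4 (Suc k) 0 = 1 \<and> K4 (Suc k) 1 = k \<and> K4 (Suc k) 2 + Suc k = 2 ^ k
   \<and> 2 * K4 (Suc k) 3 + k = k * k \<and> 2 * K4 (Suc k) 4 + 2 * Suc k + k * k = 2 ^ Suc k + k"
proof (induction k)
  case 0 then show ?case using base4 by simp
next
  case (Suc k)
  note r = rec4[of "Suc k", simplified]
  have sq: "Suc k * Suc k = k * k + 2 * k + 1" by (simp add: algebra_simps)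
  have p: "(2::nat) ^ Suc (Suc k) = 2 * 2 ^ Suc k" "(2::nat) ^ Suc k = 2 * 2 ^ k" by simp_all
  show ?case using Suc.IH r sq p by auto
qed

theorem count4: "n \<ge> 1 \<Longrightarrow> a_count P4 n = 2 ^ n - n"
proof -
  assume n: "n \<ge> 1"
  then obtain k where k: "n = Suc k" by (cases n) auto
  have "a_count P4 n = card (Lset d4 S4start n)" using L4_eq[OF n] by (simp add: a_count_AVP)
  also have "\<dots> = (\<Sum>i<5. K4 n i)"
    by (rule count_total[OF L4_fin[OF n] n d4_nos0 k4_rng])
  also have "\<dots> = K4 n 0 + K4 n 1 + K4 n 2 + K4 n 3 + K4 n 4" by (simp add: numeral_eq_Suc)
  finally have e: "a_count P4 n = K4 n 0 + K4 n 1 + K4 n 2 + K4 n 3 + K4 n 4" .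
  have p: "(2::nat) ^ Suc k = 2 * 2 ^ k" by simp
  have "a_count P4 n + n = 2 ^ n" using e closed4[of k] k p by auto
  then show ?thesis by simp
qed

abbreviation "P3 \<equiv> {[0,1,0,1], [0,1,1,2], [0,1,2,1]} :: nat list set"

datatype st3 = S3start | A3 nat | B3 nat | C3 nat | D3

fun d3 :: "st3 \<Rightarrow> nat \<Rightarrow> st3 option" where
  "d3 S3start v = (if v = 0 then Some (A3 0) else None)"
| "d3 (A3 m) v = (if v = 0 then Some (A3 m) else if v = Suc m then Some (B3 m) else None)"
| "d3 (B3 k) v = (if v = 0 then Some (A3 (Suc k)) else if v = Suc k then Some (C3 k)
     else if v = Suc (Suc k) then Some (B3 (Suc k)) else None)"
| "d3 (C3 k) v = (if v = 0 then Some D3 else if v = Suc k then Some (C3 k) else None)"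
| "d3 D3 v = (if v = 0 then Some D3 else None)"

fun I3 :: "st3 \<Rightarrow> nat list \<Rightarrow> bool" where
  "I3 S3start x = False"
| "I3 (A3 m) x = (last x = 0 \<and> asc x = m \<and> (\<forall>e\<in>set x. e \<le> m) \<and> NR x \<and> 0 \<in> set x
      \<and> (\<forall>w. 0 < w \<and> w \<le> m \<longrightarrow> subseq [0,w] x)
      \<and> (\<forall>w. 0 < w \<and> w \<le> m \<longrightarrow> subseq [0,w,0] x))"
| "I3 (B3 k) x = (last x = Suc k \<and> asc x = Suc k \<and> (\<forall>e\<in>set x. e \<le> Suc k) \<and> NR x \<and> 0 \<in> set x
      \<and> (\<forall>w. 0 < w \<and> w \<le> Suc k \<longrightarrow> subseq [0,w] x)
      \<and> (\<forall>a. \<not> subseq [Suc k, a] x)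
      \<and> (\<forall>w. 0 < w \<and> w < Suc k \<longrightarrow> subseq [0,w,Suc k] x))"
| "I3 (C3 k) x = (last x = Suc k \<and> (\<forall>a c. a < c \<and> c < Suc k \<longrightarrow> \<not> subseq [a,c,c] x)
      \<and> (\<forall>a. a < Suc k \<longrightarrow> \<not> subseq [a,Suc k,a] x)
      \<and> (\<forall>c. Suc k < c \<longrightarrow> \<not> subseq [Suc k,c] x)
      \<and> subseq [0,Suc k,Suc k] x
      \<and> (\<forall>w. 0 < w \<and> w < Suc k \<longrightarrow> subseq [0,w,Suc k] x))"
| "I3 D3 x = (\<exists>b. 0 < b \<and> subseq [0,b,b] x \<and> subseq [0,b,0] x
      \<and> (\<forall>w. 0 < w \<and> w < b \<longrightarrow> subseq [0,w,b] x))"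

lemma P3_simp: "(\<forall>p\<in>P3. \<not> newocc p x v) \<longleftrightarrow> \<not> O0101 x v \<and> \<not> O0112 x v \<and> \<not> O0121 x v"
proof -
  have "(\<forall>p\<in>P3. \<not> newocc p x v) \<longleftrightarrow>
    \<not> newocc [0,1,0,1] x v \<and> \<not> newocc [0,1,1,2] x v \<and> \<not> newocc [0,1,2,1] x v" by blast
  then show ?thesis unfolding no_O_iff .
qed

lemma step3:
  assumes x: "x \<noteq> []" and I: "I3 s x" and av: "AVP P3 x"
  shows "((v \<le> Suc (asc x) \<and> (\<forall>p\<in>P3. \<not> newocc p x v)) \<longleftrightarrow> d3 s v \<noteq> None)
     \<and> (\<forall>s'. d3 s v = Some s' \<longrightarrow> I3 s' (x @ [v]))"
proof (cases s)
  case S3start then show ?thesis using I by simp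
next
  case (A3 m)
  then have h: "last x = 0" "asc x = m" "\<And>e. e \<in> set x \<Longrightarrow> e \<le> m" "NR x" "0 \<in> set x"
      "\<And>w. 0 < w \<Longrightarrow> w \<le> m \<Longrightarrow> subseq [0,w] x"
      "\<And>w. 0 < w \<Longrightarrow> w \<le> m \<Longrightarrow> subseq [0,w,0] x" using I by auto
  have A: "(v \<le> Suc (asc x) \<and> \<not> O0101 x v \<and> \<not> O0112 x v \<and> \<not> O0121 x v) \<longleftrightarrow> d3 s v \<noteq> None"
  proof (cases "v = 0")
    case True
    have "d3 s v \<noteq> None" using True A3 by simp
    then show ?thesis using True noO0101_0 noO0112_le1[of 0] noO0121_0 by simp
  next
    case v0: False
    show ?thesis
    proof (cases "v \<le> m")
      case True
      have "O0101 x v" using O0101I[of 0 v x] h(7)[of v] v0 True by simp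
      moreover have "d3 s v = None" using A3 v0 True by auto
      ultimately show ?thesis by simp
    next
      case False
      show ?thesis
      proof (cases "v = Suc m")
        case True
        have ns: "v \<notin> set x" using h(3) True by fastforce
        have "d3 s v \<noteq> None" using True A3 by simp
        then show ?thesis using noO0101_notin[OF ns] NR_noO[OF h(4)] noO0121_notin[OF ns] True h(2) by simp
      next
        case F: False
        have "d3 s v = None" using A3 v0 F by auto
        moreover have "\<not> v \<le> Suc (asc x)" using h(2) False F by simp
        ultimately show ?thesis by simp
      qed
    qed
  qed
  have B: "I3 s' (x @ [v])" if "d3 s v = Some s'" for s'
  proof (cases "v = 0")
    case True
    then have s': "s' = A3 m" using that A3 by simp
    have "asc (x @ [v]) = m" using h(1,2) x True by (simp add: asc_snoc)
    moreover have "NR (x @ [v])" using NR_snoc_0[OF h(4)] True by simp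
    moreover have "\<forall>e\<in>set (x @ [v]). e \<le> m" using h(3) True by auto
    moreover have "\<forall>w. 0 < w \<and> w \<le> m \<longrightarrow> subseq [0,w] (x @ [v])" using h(6) by simp
    moreover have "\<forall>w. 0 < w \<and> w \<le> m \<longrightarrow> subseq [0,w,0] (x @ [v])" using h(6) True by simp
    ultimately show ?thesis using s' True h(5) by simp
  next
    case False
    then have v: "v = Suc m" "s' = B3 m" using that A3 by (auto split: if_splits)
    have ns: "v \<notin> set x" using h(3) v by fastforce
    have "asc (x @ [v]) = Suc m" using h(1,2) x v by (simp add: asc_snoc)
    moreover have "NR (x @ [v])" using NR_snoc_new[OF h(4) ns] .
    moreover have "\<forall>e\<in>set (x @ [v]). e \<le> Suc m" using h(3) v by fastforce
    moreover have "\<forall>w. 0 < w \<and> w \<le> Suc m \<longrightarrow> subseq [0,w] (x @ [v])"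
      using h(5,6) v by (auto simp: le_Suc_eq)
    moreover have "\<forall>a. \<not> subseq [Suc m, a] (x @ [v])" using ns v sub2_set by fastforce
    moreover have "\<forall>w. 0 < w \<and> w < Suc m \<longrightarrow> subseq [0,w,Suc m] (x @ [v])" using h(6) v by simp
    ultimately show ?thesis using v h(5) by simp
  qed
  have B': "\<forall>s'. d3 s v = Some s' \<longrightarrow> I3 s' (x @ [v])" using B by blast
  show ?thesis unfolding P3_simp using A B' by (rule conjI)
next
  case (B3 k)
  define m where "m = Suc k"
  have dB: "d3 s v = (if v = 0 then Some (A3 m) else if v = m then Some (C3 k) else if v = Suc m then Some (B3 m) else None)"
    using B3 by (simp add: m_def)
  have h: "last x = m" "asc x = m" "\<And>e. e \<in> set x \<Longrightarrow> e \<le> m" "NR x" "0 \<in> set x"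
      "\<And>w. 0 < w \<Longrightarrow> w \<le> m \<Longrightarrow> subseq [0,w] x"
      "\<And>a. \<not> subseq [m, a] x"
      "\<And>w. 0 < w \<Longrightarrow> w < m \<Longrightarrow> subseq [0,w,m] x" using I B3 by (auto simp: m_def)
  have m0: "0 < m" by (simp add: m_def)
  have A: "(v \<le> Suc (asc x) \<and> \<not> O0101 x v \<and> \<not> O0112 x v \<and> \<not> O0121 x v) \<longleftrightarrow> d3 s v \<noteq> None"
  proof (cases "v = 0")
    case True
    have "d3 s v \<noteq> None" using True dB by simp
    then show ?thesis using True noO0101_0 noO0112_le1[of 0] noO0121_0 by simp
  next
    case v0: False
    show ?thesis
    proof (cases "v < m")
      case True
      have "O0121 x v" using O0121I[of 0 v m x] h(8)[of v] v0 True by simp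
      moreover have "d3 s v = None" using dB v0 True by auto
      ultimately show ?thesis by simp
    next
      case False
      show ?thesis
      proof (cases "v = m")
        case True
        have o1: "\<not> O0101 x v"
        proof
          assume "O0101 x v"
          then obtain a where "subseq [a,v,a] x" unfolding O0101_def by blast
          then have "subseq [v,a] x" by (rule conjunct2[OF conjunct2[OF sub3_sub2]])
          then show False using h(7) True by blast
        qed
        have o3: "\<not> O0121 x v" by (rule noO0121_bound) (use h(3) True in auto)
        have "d3 s v \<noteq> None" using True dB m0 by simp
        then show ?thesis using o1 NR_noO[OF h(4)] o3 True h(2) by simp
      next
        case vm: False
        show ?thesis
        proof (cases "v = Suc m")
          case True
          have ns: "v \<notin> set x" using h(3) True by fastforce
          have "d3 s v \<noteq> None" using True dB by simp
          then show ?thesis using noO0101_notin[OF ns] NR_noO[OF h(4)] noO0121_notin[OF ns] True h(2) by simp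
        next
          case F: False
          have "d3 s v = None" using dB v0 vm F by auto
          moreover have "\<not> v \<le> Suc (asc x)" using h(2) False vm F by simp
          ultimately show ?thesis by simp
        qed
      qed
    qed
  qed
  have B: "I3 s' (x @ [v])" if "d3 s v = Some s'" for s'
  proof -
    have e: "(if v = 0 then Some (A3 m) else if v = m then Some (C3 k) else if v = Suc m then Some (B3 m) else None) = Some s'"
      using that dB by simp
    consider "v = 0" | "v = m" | "v = Suc m" using e by (auto split: if_splits)
    then show ?thesis
    proof cases
      case 1
      then have s': "s' = A3 m" using that dB by simp
      have "asc (x @ [v]) = m" using h(1,2) x 1 m0 by (simp add: asc_snoc)
      moreover have "NR (x @ [v])" using NR_snoc_0[OF h(4)] 1 by simp
      moreover have "\<forall>e\<in>set (x @ [v]). e \<le> m" using h(3) 1 by auto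
      moreover have "\<forall>w. 0 < w \<and> w \<le> m \<longrightarrow> subseq [0,w] (x @ [v])" using h(6) by simp
      moreover have "\<forall>w. 0 < w \<and> w \<le> m \<longrightarrow> subseq [0,w,0] (x @ [v])" using h(6) 1 by simp
      ultimately show ?thesis using s' 1 h(5) by simp
    next
      case 2
      then have s': "s' = C3 k" using that dB m0 by auto
      have c1: "\<forall>a c. a < c \<and> c < m \<longrightarrow> \<not> subseq [a,c,c] (x @ [v])"
        using h(4) 2 unfolding NR_def by auto
      have c2: "\<forall>a. a < m \<longrightarrow> \<not> subseq [a,m,a] (x @ [v])"
      proof (intro allI impI notI)
        fix a assume a: "a < m" "subseq [a,m,a] (x @ [v])"
        then have "subseq [a,m,a] x" using 2 by auto
        then have "subseq [m,a] x" by (rule conjunct2[OF conjunct2[OF sub3_sub2]])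
        then show False using h(7) by blast
      qed
      have c3: "\<forall>c. m < c \<longrightarrow> \<not> subseq [m,c] (x @ [v])" using h(7) 2 by auto
      have c4: "subseq [0,m,m] (x @ [v])" using h(6)[OF m0] 2 by simp
      have c5: "\<forall>w. 0 < w \<and> w < m \<longrightarrow> subseq [0,w,m] (x @ [v])" using h(8) by simp
      show ?thesis using s' 2 h(1) c1 c2 c3 c4 c5 by (simp add: m_def)
    next
      case 3
      then have s': "s' = B3 m" using that dB by auto
      have ns: "v \<notin> set x" using h(3) 3 by fastforce
      have "asc (x @ [v]) = Suc m" using h(1,2) x 3 by (simp add: asc_snoc)
      moreover have "NR (x @ [v])" using NR_snoc_new[OF h(4) ns] .
      moreover have "\<forall>e\<in>set (x @ [v]). e \<le> Suc m" using h(3) 3 by fastforce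
      moreover have "\<forall>w. 0 < w \<and> w \<le> Suc m \<longrightarrow> subseq [0,w] (x @ [v])"
        using h(5,6) 3 by (auto simp: le_Suc_eq)
      moreover have "\<forall>a. \<not> subseq [Suc m, a] (x @ [v])" using ns 3 sub2_set by fastforce
      moreover have "\<forall>w. 0 < w \<and> w < Suc m \<longrightarrow> subseq [0,w,Suc m] (x @ [v])" using h(6) 3 by simp
      ultimately show ?thesis using s' 3 h(5) by simp
    qed
  qed
  have B': "\<forall>s'. d3 s v = Some s' \<longrightarrow> I3 s' (x @ [v])" using B by blast
  show ?thesis unfolding P3_simp using A B' by (rule conjI)
next
  case (C3 k)
  define b where "b = Suc k"
  have dC: "d3 s v = (if v = 0 then Some D3 else if v = b then Some (C3 k) else None)"
    using C3 by (simp add: b_def)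
  have h: "last x = b" "\<And>a c. a < c \<Longrightarrow> c < b \<Longrightarrow> \<not> subseq [a,c,c] x"
      "\<And>a. a < b \<Longrightarrow> \<not> subseq [a,b,a] x"
      "\<And>c. b < c \<Longrightarrow> \<not> subseq [b,c] x"
      "subseq [0,b,b] x"
      "\<And>w. 0 < w \<Longrightarrow> w < b \<Longrightarrow> subseq [0,w,b] x" using I C3 by (auto simp: b_def)
  have b0: "0 < b" by (simp add: b_def)
  have bset: "b \<in> set x" using sub3_set[OF h(5)] by simp
  have basc: "b \<le> asc x" using ascent_seq_elems[OF _ bset] av by (simp add: AVP_def)
  have A: "(v \<le> Suc (asc x) \<and> \<not> O0101 x v \<and> \<not> O0112 x v \<and> \<not> O0121 x v) \<longleftrightarrow> d3 s v \<noteq> None"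
  proof (cases "v = 0")
    case True
    have "d3 s v \<noteq> None" using True dC by simp
    then show ?thesis using True noO0101_0 noO0112_le1[of 0] noO0121_0 by simp
  next
    case v0: False
    show ?thesis
    proof (cases "v < b")
      case True
      have "O0121 x v" using O0121I[of 0 v b x] h(6)[of v] v0 True by simp
      moreover have "d3 s v = None" using dC v0 True by auto
      ultimately show ?thesis by simp
    next
      case False
      show ?thesis
      proof (cases "v = b")
        case True
        have o1: "\<not> O0101 x v" unfolding O0101_def using h(3) True by blast
        have o2: "\<not> O0112 x v" unfolding O0112_def using h(2) True by blast
        have o3: "\<not> O0121 x v"
        proof
          assume "O0121 x v"
          then obtain a c where ac: "v < c" "subseq [a,v,c] x" unfolding O0121_def by blast
          from ac(2) have "subseq [v,c] x" by (rule conjunct2[OF conjunct2[OF sub3_sub2]])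
          then show False using h(4) ac(1) True by blast
        qed
        have "d3 s v \<noteq> None" using True dC by simp
        then show ?thesis using o1 o2 o3 True basc by simp
      next
        case vb: False
        then have "b < v" using False by simp
        then have "O0112 x v" using O0112I[of 0 b v x] h(5) b0 by simp
        moreover have "d3 s v = None" using dC v0 vb by auto
        ultimately show ?thesis by simp
      qed
    qed
  qed
  have B: "I3 s' (x @ [v])" if "d3 s v = Some s'" for s'
  proof (cases "v = 0")
    case True
    then have s': "s' = D3" using that dC by simp
    have "subseq [0,b] x" by (rule conjunct1[OF sub3_sub2[OF h(5)]])
    then have "subseq [0,b,0] (x @ [v])" using True by simp
    moreover have "subseq [0,b,b] (x @ [v])" using h(5) by simp
    moreover have "\<forall>w. 0 < w \<and> w < b \<longrightarrow> subseq [0,w,b] (x @ [v])" using h(6) by simp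
    ultimately show ?thesis using s' b0 by auto
  next
    case False
    then have v: "v = b" "s' = C3 k" using that dC by (auto split: if_splits)
    have c1: "\<forall>a c. a < c \<and> c < b \<longrightarrow> \<not> subseq [a,c,c] (x @ [v])" using h(2) v by auto
    have c2: "\<forall>a. a < b \<longrightarrow> \<not> subseq [a,b,a] (x @ [v])" using h(3) v by auto
    have c3: "\<forall>c. b < c \<longrightarrow> \<not> subseq [b,c] (x @ [v])" using h(4) v by auto
    have c4: "subseq [0,b,b] (x @ [v])" using h(5) by simp
    have c5: "\<forall>w. 0 < w \<and> w < b \<longrightarrow> subseq [0,w,b] (x @ [v])" using h(6) by simp
    show ?thesis using v c1 c2 c3 c4 c5 by (simp add: b_def)
  qed
  have B': "\<forall>s'. d3 s v = Some s' \<longrightarrow> I3 s' (x @ [v])" using B by blast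
  show ?thesis unfolding P3_simp using A B' by (rule conjI)
next
  case D3
  then obtain b where h: "0 < b" "subseq [0,b,b] x" "subseq [0,b,0] x"
      "\<And>w. 0 < w \<Longrightarrow> w < b \<Longrightarrow> subseq [0,w,b] x" using I by auto
  have A: "(v \<le> Suc (asc x) \<and> \<not> O0101 x v \<and> \<not> O0112 x v \<and> \<not> O0121 x v) \<longleftrightarrow> d3 s v \<noteq> None"
  proof (cases "v = 0")
    case True
    have "d3 s v \<noteq> None" using True D3 by simp
    then show ?thesis using True noO0101_0 noO0112_le1[of 0] noO0121_0 by simp
  next
    case v0: False
    have "d3 s v = None" using D3 v0 by simp
    moreover have "O0101 x v \<or> O0112 x v \<or> O0121 x v"
    proof (cases "v < b")
      case True
      then show ?thesis using O0121I[of 0 v b x] h(4)[of v] v0 by simp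
    next
      case False
      show ?thesis
      proof (cases "v = b")
        case True
        then show ?thesis using O0101I[of 0 v x] h(3) h(1) by simp
      next
        case F: False
        then have "b < v" using False by simp
        then show ?thesis using O0112I[of 0 b v x] h(1,2) by simp
      qed
    qed
    ultimately show ?thesis by auto
  qed
  have B: "I3 s' (x @ [v])" if "d3 s v = Some s'" for s'
  proof -
    have "s' = D3" using that D3 by (auto split: if_splits)
    moreover have "subseq [0,b,b] (x @ [v])" "subseq [0,b,0] (x @ [v])"
       "\<forall>w. 0 < w \<and> w < b \<longrightarrow> subseq [0,w,b] (x @ [v])" using h by simp_all
    ultimately show ?thesis using h(1) by auto
  qed
  have B': "\<forall>s'. d3 s v = Some s' \<longrightarrow> I3 s' (x @ [v])" using B by blast
  show ?thesis unfolding P3_simp using A B' by (rule conjI)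
qed

lemma C3_correct: "x \<noteq> [] \<Longrightarrow> (AVP P3 x \<longleftrightarrow> runst d3 S3start x \<noteq> None)"
proof -
  assume "x \<noteq> []"
  have "(AVP P3 x \<longleftrightarrow> runst d3 S3start x \<noteq> None) \<and> (\<forall>s. runst d3 S3start x = Some s \<longrightarrow> I3 s x)"
  proof (rule automaton_correct[where Inv = I3 and sI = "A3 0"])
    show "\<forall>p\<in>P3. 2 \<le> length p" by simp
    show "\<And>v. d3 S3start v = (if v = 0 then Some (A3 0) else None)" by simp
    show "I3 (A3 0) [0]" by (auto simp: NR_def)
    show "\<And>s x v. x \<noteq> [] \<Longrightarrow> I3 s x \<Longrightarrow> AVP P3 x \<Longrightarrow>
      ((v \<le> Suc (asc x) \<and> (\<forall>p\<in>P3. \<not> newocc p x v)) \<longleftrightarrow> d3 s v \<noteq> None)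
      \<and> (\<forall>s'. d3 s v = Some s' \<longrightarrow> I3 s' (x @ [v]))" using step3 by blast
    show "x \<noteq> []" by fact
  qed
  then show ?thesis by blast
qed

fun k3 :: "st3 \<Rightarrow> nat" where
  "k3 S3start = 0" | "k3 (A3 m) = 0" | "k3 (B3 k) = 1" | "k3 (C3 k) = 2" | "k3 D3 = 3"

abbreviation "K3 n j \<equiv> card (Kset d3 S3start k3 n j)"

lemma L3_eq: "n \<ge> 1 \<Longrightarrow> Lset d3 S3start n = {x. AVP P3 x \<and> length x = n}"
  by (rule Lset_AVP) (use C3_correct in auto)

lemma L3_fin: "n \<ge> 1 \<Longrightarrow> finite (Lset d3 S3start n)"
  using L3_eq finite_AVP by simp

lemma d3_nos0: "d3 s v \<noteq> Some S3start"
  by (cases s) auto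

lemma d3_fin: "finite {v. d3 s v \<noteq> None}"
  by (rule finite_by_bound[where B = "case s of A3 m \<Rightarrow> Suc m | B3 k \<Rightarrow> Suc (Suc k) | C3 k \<Rightarrow> Suc k | _ \<Rightarrow> 0"])
     (cases s; auto split: if_splits)

lemma k3_rng: "s \<noteq> S3start \<Longrightarrow> k3 s < 4" by (cases s) auto

lemma c3_sets:
  "s \<noteq> S3start \<Longrightarrow> {v. \<exists>s'. d3 s v = Some s' \<and> k3 s' = j} =
    (case s of A3 m \<Rightarrow> (if j = 0 then {0} else if j = 1 then {Suc m} else {})
     | B3 k \<Rightarrow> (if j = 0 then {0} else if j = 2 then {Suc k} else if j = 1 then {Suc (Suc k)} else {})
     | C3 k \<Rightarrow> (if j = 3 then {0} else if j = 2 then {Suc k} else {})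
     | D3 \<Rightarrow> (if j = 3 then {0} else {})
     | S3start \<Rightarrow> {})"
  by (cases s) (auto split: if_splits)

lemma rec3:
  assumes "n \<ge> 1"
  shows "K3 (Suc n) 0 = K3 n 0 + K3 n 1"
    "K3 (Suc n) 1 = K3 n 0 + K3 n 1"
    "K3 (Suc n) 2 = K3 n 1 + K3 n 2"
    "K3 (Suc n) 3 = K3 n 2 + K3 n 3"
proof -
  note cs = count_step[OF L3_fin[OF assms] assms d3_nos0 d3_fin _ k3_rng]
  have "K3 (Suc n) 0 = (\<Sum>i<4. (\<lambda>i. if i \<le> 1 then 1 else 0) i * K3 n i)"
    by (rule cs) (auto simp: c3_sets split: st3.splits)
  then show "K3 (Suc n) 0 = K3 n 0 + K3 n 1" by (simp add: numeral_eq_Suc)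
  have "K3 (Suc n) 1 = (\<Sum>i<4. (\<lambda>i. if i \<le> 1 then 1 else 0) i * K3 n i)"
    by (rule cs) (auto simp: c3_sets split: st3.splits)
  then show "K3 (Suc n) 1 = K3 n 0 + K3 n 1" by (simp add: numeral_eq_Suc)
  have "K3 (Suc n) 2 = (\<Sum>i<4. (\<lambda>i. if i = 1 then 1 else if i = 2 then 1 else 0) i * K3 n i)"
    by (rule cs) (auto simp: c3_sets split: st3.splits)
  then show "K3 (Suc n) 2 = K3 n 1 + K3 n 2" by (simp add: numeral_eq_Suc)
  have "K3 (Suc n) 3 = (\<Sum>i<4. (\<lambda>i. if i = 2 then 1 else if i = 3 then 1 else 0) i * K3 n i)"
    by (rule cs) (auto simp: c3_sets split: st3.splits)
  then show "K3 (Suc n) 3 = K3 n 2 + K3 n 3" by (simp add: numeral_eq_Suc)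
qed

lemma base3: "K3 1 0 = 1" "K3 1 1 = 0" "K3 1 2 = 0" "K3 1 3 = 0"
  using Kset_one_card[of d3 S3start "A3 0" k3] by simp_all

lemma closed3:
  "K3 (Suc (Suc j)) 0 = 2 ^ j \<and> K3 (Suc (Suc j)) 1 = 2 ^ j \<and> K3 (Suc (Suc j)) 2 + 1 = 2 ^ j
   \<and> K3 (Suc (Suc j)) 3 + j + 1 = 2 ^ j"
proof (induction j)
  case 0 then show ?case using base3 rec3[of 1] by simp
next
  case (Suc j)
  note r = rec3[of "Suc (Suc j)", simplified]
  show ?case using Suc.IH r by auto
qed

theorem count3: "n \<ge> 1 \<Longrightarrow> a_count P3 n = 2 ^ n - n"
proof -
  assume n: "n \<ge> 1"
  have "a_count P3 n = card (Lset d3 S3start n)" using L3_eq[OF n] by (simp add: a_count_AVP)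
  also have "\<dots> = (\<Sum>i<4. K3 n i)"
    by (rule count_total[OF L3_fin[OF n] n d3_nos0 k3_rng])
  also have "\<dots> = K3 n 0 + K3 n 1 + K3 n 2 + K3 n 3" by (simp add: numeral_eq_Suc)
  finally have e: "a_count P3 n = K3 n 0 + K3 n 1 + K3 n 2 + K3 n 3" .
  show ?thesis
  proof (cases "n = 1")
    case True then show ?thesis using e base3 by simp
  next
    case False
    then obtain j where j: "n = Suc (Suc j)" using n by (cases n; cases "n - 1") auto
    have p: "(2::nat) ^ Suc (Suc j) = 4 * 2 ^ j" by simp
    have "a_count P3 n + n = 2 ^ n" using e closed3[of j] j p by auto
    then show ?thesis by simp
  qed
qed

abbreviation "P0 \<equiv> {[0,1,0,1], [0,1,0,2], [0,1,1,2]} :: nat list set"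

datatype st0 = S0start | Z0 | R0 nat | T0 nat

fun d0 :: "st0 \<Rightarrow> nat \<Rightarrow> st0 option" where
  "d0 S0start v = (if v = 0 then Some Z0 else None)"
| "d0 Z0 v = (if v = 0 then Some Z0 else if v = 1 then Some (R0 0) else None)"
| "d0 (R0 k) v = (if v = Suc (Suc k) then Some (R0 (Suc k)) else if v \<le> Suc k then Some (T0 v) else None)"
| "d0 (T0 l) v = (if v \<le> l then Some (T0 v) else None)"

fun I0 :: "st0 \<Rightarrow> nat list \<Rightarrow> bool" where
  "I0 S0start x = False"
| "I0 Z0 x = (set x \<subseteq> {0} \<and> sorted x \<and> asc x = 0)"
| "I0 (R0 k) x = (sorted x \<and> last x = Suc k \<and> asc x = Suc k \<and> NR x
      \<and> (\<forall>u. u < Suc k \<longrightarrow> subseq [u, Suc u] x))"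
| "I0 (T0 l) x = (last x = l \<and> (\<forall>a b. a < b \<and> b \<le> l \<longrightarrow> \<not> subseq [a,b,a] x)
      \<and> (\<forall>a b. a < b \<and> b < l \<longrightarrow> \<not> subseq [a,b,b] x)
      \<and> (subseq [l, Suc l, l] x \<or> (\<exists>a. a < l \<and> subseq [a,l,l] x))
      \<and> (\<forall>u. u < l \<longrightarrow> subseq [u, Suc u] x))"

lemma P0_simp: "(\<forall>p\<in>P0. \<not> newocc p x v) \<longleftrightarrow> \<not> O0101 x v \<and> \<not> O0102 x v \<and> \<not> O0112 x v"
proof -
  have "(\<forall>p\<in>P0. \<not> newocc p x v) \<longleftrightarrow>
    \<not> newocc [0,1,0,1] x v \<and> \<not> newocc [0,1,0,2] x v \<and> \<not> newocc [0,1,1,2] x v" by blast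
  then show ?thesis unfolding no_O_iff .
qed

lemma step0:
  assumes x: "x \<noteq> []" and I: "I0 s x" and av: "AVP P0 x"
  shows "((v \<le> Suc (asc x) \<and> (\<forall>p\<in>P0. \<not> newocc p x v)) \<longleftrightarrow> d0 s v \<noteq> None)
     \<and> (\<forall>s'. d0 s v = Some s' \<longrightarrow> I0 s' (x @ [v]))"
proof (cases s)
  case S0start then show ?thesis using I by simp
next
  case Z0
  then have h: "set x \<subseteq> {0}" "sorted x" "asc x = 0" using I by auto
  have l: "last x = 0" using h(1) x last_in_set by blast
  have z0: "0 \<in> set x" using l x last_in_set by metis
  have A: "(v \<le> Suc (asc x) \<and> \<not> O0101 x v \<and> \<not> O0102 x v \<and> \<not> O0112 x v) \<longleftrightarrow> d0 s v \<noteq> None"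
  proof (cases "v \<le> 1")
    case True
    have o1: "\<not> O0101 x v" using noO0101_sorted[OF h(2)] .
    have o2: "\<not> O0102 x v" using noO0102_sorted[OF h(2)] .
    have o3: "\<not> O0112 x v" using noO0112_le1[OF True] .
    have "d0 s v \<noteq> None" using True Z0 by auto
    then show ?thesis using o1 o2 o3 True h(3) by simp
  next
    case False
    then have "d0 s v = None" using Z0 by auto
    then show ?thesis using False h(3) by simp
  qed
  have B: "I0 s' (x @ [v])" if "d0 s v = Some s'" for s'
  proof (cases "v = 0")
    case True
    then have "s' = Z0" using that Z0 by simp
    then show ?thesis using True h l x by (auto simp: asc_snoc sorted_snoc_iff)
  next
    case False
    then have v: "v = 1" "s' = R0 0" using that Z0 by (auto split: if_splits)
    have nr: "NR x" unfolding NR_def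
    proof (intro allI impI notI)
      fix a b :: nat assume ab: "a < b" "subseq [a,b,b] x"
      then have "b \<in> set x" using sub3_set[OF ab(2)] by simp
      then show False using h(1) ab(1) by auto
    qed
    have ns: "v \<notin> set x" using h(1) v by auto
    have "sorted (x @ [v])" using h(1,2) v by (auto simp: sorted_snoc_iff)
    moreover have "asc (x @ [v]) = 1" using h(3) l x v by (simp add: asc_snoc)
    moreover have "NR (x @ [v])" using NR_snoc_new[OF nr ns] .
    moreover have "\<forall>u. u < Suc 0 \<longrightarrow> subseq [u, Suc u] (x @ [v])" using z0 v by simp
    ultimately show ?thesis using v by simp
  qed
  have B': "\<forall>s'. d0 s v = Some s' \<longrightarrow> I0 s' (x @ [v])" using B by blast
  show ?thesis unfolding P0_simp using A B' by (rule conjI)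
next
  case (R0 k)
  define m where "m = Suc k"
  have dR: "d0 s v = (if v = Suc m then Some (R0 m) else if v \<le> m then Some (T0 v) else None)"
    using R0 by (simp add: m_def)
  have h: "sorted x" "last x = m" "asc x = m" "NR x" "\<And>u. u < m \<Longrightarrow> subseq [u, Suc u] x"
    using I R0 by (auto simp: m_def)
  have km: "k < m" "Suc k = m" by (simp_all add: m_def)
  have le: "\<And>e. e \<in> set x \<Longrightarrow> e \<le> m" using h(1,2) sorted_le_last by metis
  have mset: "m \<in> set x" using h(2) x last_in_set by metis
  have A: "(v \<le> Suc (asc x) \<and> \<not> O0101 x v \<and> \<not> O0102 x v \<and> \<not> O0112 x v) \<longleftrightarrow> d0 s v \<noteq> None"
  proof (cases "v \<le> Suc m")
    case True
    have o1: "\<not> O0101 x v" using noO0101_sorted[OF h(1)] .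
    have o2: "\<not> O0102 x v" using noO0102_sorted[OF h(1)] .
    have o3: "\<not> O0112 x v" using NR_noO[OF h(4)] .
    have "d0 s v \<noteq> None" using True dR by auto
    then show ?thesis using o1 o2 o3 True h(3) by simp
  next
    case False
    then have "d0 s v = None" using dR by auto
    then show ?thesis using False h(3) by simp
  qed
  have B: "I0 s' (x @ [v])" if "d0 s v = Some s'" for s'
  proof (cases "v = Suc m")
    case True
    then have s': "s' = R0 m" using that dR by simp
    have ns: "v \<notin> set x" using le True by fastforce
    have "\<forall>e\<in>set x. e \<le> v" using le True le_SucI by blast
    then have "sorted (x @ [v])" using h(1) by (simp add: sorted_snoc_iff)
    moreover have "asc (x @ [v]) = Suc m" using True h(2,3) x by (simp add: asc_snoc)
    moreover have "NR (x @ [v])" using NR_snoc_new[OF h(4) ns] .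
    moreover have "\<forall>u. u < Suc m \<longrightarrow> subseq [u, Suc u] (x @ [v])"
    proof (intro allI impI)
      fix u assume u: "u < Suc m"
      show "subseq [u, Suc u] (x @ [v])"
      proof (cases "u < m")
        case True then show ?thesis using h(5)[OF True] by simp
      next
        case False then have "u = m" using u by simp
        then show ?thesis using mset True by simp
      qed
    qed
    ultimately show ?thesis using s' True by simp
  next
    case False
    then have v: "v \<le> m" "s' = T0 v" using that dR by (auto split: if_splits)
    have G: "\<forall>a b. a < b \<and> b \<le> v \<longrightarrow> \<not> subseq [a,b,a] (x @ [v])"
    proof (intro allI impI notI)
      fix a b assume ab: "a < b \<and> b \<le> v" "subseq [a,b,a] (x @ [v])"
      then have "subseq [a,b,a] x" by auto
      then show False using sub3_sorted[OF _ h(1)] ab(1) by fastforce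
    qed
    have H: "\<forall>a b. a < b \<and> b < v \<longrightarrow> \<not> subseq [a,b,b] (x @ [v])"
      using h(4) unfolding NR_def by auto
    have F: "subseq [v, Suc v, v] (x @ [v]) \<or> (\<exists>a. a < v \<and> subseq [a,v,v] (x @ [v]))"
    proof (cases "v < m")
      case True then show ?thesis using h(5)[OF True] by simp
    next
      case False
      then have "v = m" using v(1) by simp
      then show ?thesis using h(5)[OF km(1)] km by auto
    qed
    have O2: "\<forall>u. u < v \<longrightarrow> subseq [u, Suc u] (x @ [v])" using h(5) v(1) by simp
    show ?thesis using v(2) G H F O2 by simp
  qed
  have B': "\<forall>s'. d0 s v = Some s' \<longrightarrow> I0 s' (x @ [v])" using B by blast
  show ?thesis unfolding P0_simp using A B' by (rule conjI)
next
  case (T0 l)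
  then have h: "last x = l" "\<And>a b. a < b \<Longrightarrow> b \<le> l \<Longrightarrow> \<not> subseq [a,b,a] x"
      "\<And>a b. a < b \<Longrightarrow> b < l \<Longrightarrow> \<not> subseq [a,b,b] x"
      "subseq [l, Suc l, l] x \<or> (\<exists>a. a < l \<and> subseq [a,l,l] x)"
      "\<And>u. u < l \<Longrightarrow> subseq [u, Suc u] x" using I by auto
  have lset: "l \<in> set x" using h(1) x last_in_set by metis
  have lasc: "l \<le> asc x" using ascent_seq_elems[OF _ lset] av by (simp add: AVP_def)
  have A: "(v \<le> Suc (asc x) \<and> \<not> O0101 x v \<and> \<not> O0102 x v \<and> \<not> O0112 x v) \<longleftrightarrow> d0 s v \<noteq> None"
  proof (cases "v \<le> l")
    case True
    have o1: "\<not> O0101 x v" unfolding O0101_def using h(2) True by blast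
    have o2: "\<not> O0102 x v" unfolding O0102_def using h(2) True by (meson less_imp_le order_less_le_trans)
    have o3: "\<not> O0112 x v" unfolding O0112_def using h(3) True by (meson order_less_le_trans)
    have "d0 s v \<noteq> None" using True T0 by simp
    then show ?thesis using o1 o2 o3 True lasc by simp
  next
    case False
    have "d0 s v = None" using False T0 by simp
    moreover have "O0101 x v \<or> O0102 x v \<or> O0112 x v"
      using h(4)
    proof
      assume a: "subseq [l, Suc l, l] x"
      show ?thesis
      proof (cases "v = Suc l")
        case True then show ?thesis using O0101I[of l v x] a by simp
      next
        case F: False
        then have "Suc l < v" using False by simp
        then show ?thesis using O0102I[of l "Suc l" v x] a by simp
      qed
    next
      assume "\<exists>a. a < l \<and> subseq [a,l,l] x"
      then obtain a where a: "a < l" "subseq [a,l,l] x" by blast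
      then show ?thesis using O0112I[of a l v x] False by simp
    qed
    ultimately show ?thesis by auto
  qed
  have B: "I0 s' (x @ [v])" if "d0 s v = Some s'" for s'
  proof -
    have v: "v \<le> l" "s' = T0 v" using that T0 by (auto split: if_splits)
    have G: "\<forall>a b. a < b \<and> b \<le> v \<longrightarrow> \<not> subseq [a,b,a] (x @ [v])"
      using h(2) v(1) by fastforce
    have H: "\<forall>a b. a < b \<and> b < v \<longrightarrow> \<not> subseq [a,b,b] (x @ [v])"
      using h(3) v(1) by fastforce
    have F: "subseq [v, Suc v, v] (x @ [v]) \<or> (\<exists>a. a < v \<and> subseq [a,v,v] (x @ [v]))"
    proof (cases "v < l")
      case True then show ?thesis using h(5)[OF True] by simp
    next
      case False
      then have "v = l" using v(1) by simp
      then show ?thesis using h(4) by auto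
    qed
    have O2: "\<forall>u. u < v \<longrightarrow> subseq [u, Suc u] (x @ [v])" using h(5) v(1) by simp
    show ?thesis using v(2) G H F O2 by simp
  qed
  have B': "\<forall>s'. d0 s v = Some s' \<longrightarrow> I0 s' (x @ [v])" using B by blast
  show ?thesis unfolding P0_simp using A B' by (rule conjI)
qed

definition KP :: "('s \<Rightarrow> nat \<Rightarrow> 's option) \<Rightarrow> 's \<Rightarrow> nat \<Rightarrow> ('s \<Rightarrow> bool) \<Rightarrow> nat list set" where
  "KP d s0 n P = {x. length x = n \<and> (\<exists>s. runst d s0 x = Some s \<and> P s)}"

lemma count_step_gen:
  fixes k :: "'s \<Rightarrow> nat" and c :: "nat \<Rightarrow> nat"
  assumes fin: "finite (Lset d s0 n)" and n: "n \<ge> 1"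
    and nos0: "\<And>s v. d s v \<noteq> Some s0"
    and finv: "\<And>s. finite {v. d s v \<noteq> None}"
    and cnt: "\<And>s. s \<noteq> s0 \<Longrightarrow> card {v. \<exists>s'. d s v = Some s' \<and> Phi s'} = c (k s)"
    and rng: "\<And>s. s \<noteq> s0 \<Longrightarrow> k s < r"
  shows "card (KP d s0 (Suc n) Phi) = (\<Sum>i<r. c i * card (KP d s0 n (\<lambda>s. k s = i)))"
proof -
  define V where "V x = {v. \<exists>s'. d (the (runst d s0 x)) v = Some s' \<and> Phi s'}" for x
  define L where "L = Lset d s0 n"
  have img: "KP d s0 (Suc n) Phi = (\<lambda>(x,v). x @ [v]) ` (SIGMA x:L. V x)"
  proof (rule set_eqI)
    fix y
    show "y \<in> KP d s0 (Suc n) Phi \<longleftrightarrow> y \<in> (\<lambda>(x,v). x @ [v]) ` (SIGMA x:L. V x)"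
    proof
      assume "y \<in> KP d s0 (Suc n) Phi"
      then obtain s where y: "length y = Suc n" "runst d s0 y = Some s" "Phi s"
        by (auto simp: KP_def)
      then obtain x v where xv: "y = x @ [v]" by (metis length_Suc_conv_rev)
      then obtain t where t: "runst d s0 x = Some t" "d t v = Some s" using y(2)
        by (cases "runst d s0 x") auto
      have "x \<in> L" using xv y(1) t by (auto simp: L_def Lset_def)
      moreover have "v \<in> V x" using t y(3) by (auto simp: V_def)
      ultimately show "y \<in> (\<lambda>(x,v). x @ [v]) ` (SIGMA x:L. V x)" using xv by force
    next
      assume "y \<in> (\<lambda>(x,v). x @ [v]) ` (SIGMA x:L. V x)"
      then obtain x v where xv: "y = x @ [v]" "x \<in> L" "v \<in> V x" by auto
      then obtain t where t: "runst d s0 x = Some t" "length x = n" by (auto simp: L_def Lset_def)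
      then obtain s' where "d t v = Some s'" "Phi s'" using xv(3) by (auto simp: V_def)
      then show "y \<in> KP d s0 (Suc n) Phi" using xv t by (auto simp: KP_def)
    qed
  qed
  have inj: "inj_on (\<lambda>(x,v). x @ [v]) (SIGMA x:L. V x)"
    by (auto simp: inj_on_def)
  have finL: "finite L" using fin by (simp add: L_def)
  have finV: "\<forall>x\<in>L. finite (V x)"
  proof
    fix x assume "x \<in> L"
    show "finite (V x)" by (rule finite_subset[OF _ finv[of "the (runst d s0 x)"]]) (auto simp: V_def)
  qed
  have c1: "card (KP d s0 (Suc n) Phi) = (\<Sum>x\<in>L. card (V x))"
    unfolding img using card_image[OF inj] card_SigmaI[OF finL finV] by simp
  define g where "g x = k (the (runst d s0 x))" for x
  have c2: "\<forall>x\<in>L. card (V x) = c (g x)"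
  proof
    fix x assume "x \<in> L"
    then obtain s where s: "runst d s0 x = Some s" "length x = n" by (auto simp: L_def Lset_def)
    then have "x \<noteq> []" using n by auto
    then have "s \<noteq> s0" using runst_not_s0[OF nos0 _ s(1)] by simp
    then show "card (V x) = c (g x)" using cnt[of s] s by (simp add: V_def g_def)
  qed
  have rg: "g ` L \<subseteq> {..<r}"
  proof
    fix i assume "i \<in> g ` L"
    then obtain x where "x \<in> L" "i = g x" by auto
    then obtain s where s: "runst d s0 x = Some s" "length x = n" by (auto simp: L_def Lset_def)
    then have "x \<noteq> []" using n by auto
    then have "s \<noteq> s0" using runst_not_s0[OF nos0 _ s(1)] by simp
    then show "i \<in> {..<r}" using rng[of s] s \<open>i = g x\<close> by (simp add: g_def)
  qed
  have "(\<Sum>x\<in>L. card (V x)) = (\<Sum>x\<in>L. c (g x))" using c2 by simp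
  also have "\<dots> = (\<Sum>i<r. \<Sum>x\<in>{x. x \<in> L \<and> g x = i}. c (g x))"
    by (rule sum.group[OF finL _ rg, symmetric]) simp
  also have "\<dots> = (\<Sum>i<r. c i * card {x. x \<in> L \<and> g x = i})"
    by (rule sum.cong[OF refl]) simp
  also have "\<dots> = (\<Sum>i<r. c i * card (KP d s0 n (\<lambda>s. k s = i)))"
  proof (rule sum.cong[OF refl])
    fix i
    have "{x. x \<in> L \<and> g x = i} = KP d s0 n (\<lambda>s. k s = i)"
      by (auto simp: L_def Lset_def KP_def g_def)
    then show "c i * card {x. x \<in> L \<and> g x = i} = c i * card (KP d s0 n (\<lambda>s. k s = i))" by simp
  qed
  finally show ?thesis using c1 by simp
qed

lemma KP_sub_L: "KP d s0 n P \<subseteq> Lset d s0 n"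
  by (auto simp: KP_def Lset_def)

lemma KP_union:
  assumes "finite (Lset d s0 n)" "\<And>s. \<not> (P s \<and> Q s)"
  shows "card (KP d s0 n (\<lambda>s. P s \<or> Q s)) = card (KP d s0 n P) + card (KP d s0 n Q)"
proof -
  have e: "KP d s0 n (\<lambda>s. P s \<or> Q s) = KP d s0 n P \<union> KP d s0 n Q" by (auto simp: KP_def)
  have dj: "KP d s0 n P \<inter> KP d s0 n Q = {}" using assms(2) by (auto simp: KP_def)
  have f: "finite (KP d s0 n P)" "finite (KP d s0 n Q)"
    using finite_subset[OF KP_sub_L assms(1)] by auto
  show ?thesis unfolding e using card_Un_disjoint[OF f dj] .
qed

lemma KP_cong: "(\<And>s. P s \<longleftrightarrow> Q s) \<Longrightarrow> KP d s0 n P = KP d s0 n Q"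
  by (auto simp: KP_def)

lemma KP_one:
  assumes "\<And>v. d s0 v = (if v = 0 then Some sI else None)"
  shows "card (KP d s0 (Suc 0) P) = (if P sI then 1 else 0)"
proof -
  have "KP d s0 (Suc 0) P = (if P sI then {[0]} else {})"
    using assms by (auto simp: KP_def length_Suc_conv split: if_splits)
  then show ?thesis by simp
qed

lemma C0_correct: "x \<noteq> [] \<Longrightarrow> (AVP P0 x \<longleftrightarrow> runst d0 S0start x \<noteq> None)
   \<and> (\<forall>s. runst d0 S0start x = Some s \<longrightarrow> I0 s x)"
proof (rule automaton_correct[where Inv = I0 and sI = Z0])
  show "\<forall>p\<in>P0. 2 \<le> length p" by simp
  show "\<And>v. d0 S0start v = (if v = 0 then Some Z0 else None)" by simp
  show "I0 Z0 [0]" by simp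
  show "\<And>s x v. x \<noteq> [] \<Longrightarrow> I0 s x \<Longrightarrow> AVP P0 x \<Longrightarrow>
      ((v \<le> Suc (asc x) \<and> (\<forall>p\<in>P0. \<not> newocc p x v)) \<longleftrightarrow> d0 s v \<noteq> None)
      \<and> (\<forall>s'. d0 s v = Some s' \<longrightarrow> I0 s' (x @ [v]))" using step0 by blast
qed

lemma L0_eq: "n \<ge> 1 \<Longrightarrow> Lset d0 S0start n = {x. AVP P0 x \<and> length x = n}"
  by (rule Lset_AVP) (use C0_correct in auto)

lemma L0_fin: "n \<ge> 1 \<Longrightarrow> finite (Lset d0 S0start n)"
  using L0_eq finite_AVP by simp

lemma d0_nos0: "d0 s v \<noteq> Some S0start"
  by (cases s) auto

lemma d0_fin: "finite {v. d0 s v \<noteq> None}"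
  by (rule finite_by_bound[where B = "case s of R0 k \<Rightarrow> Suc (Suc k) | T0 l \<Rightarrow> l | _ \<Rightarrow> 1"])
     (cases s; auto split: if_splits)

definition inQ :: "nat \<Rightarrow> st0 \<Rightarrow> bool" where
  "inQ l s = (case s of T0 l' \<Rightarrow> l \<le> l' | R0 k \<Rightarrow> l \<le> Suc k | _ \<Rightarrow> False)"

abbreviation "Tn n l \<equiv> card (KP d0 S0start n (\<lambda>s. s = T0 l))"
abbreviation "Qn n l \<equiv> card (KP d0 S0start n (inQ l))"
abbreviation "Rn n k \<equiv> card (KP d0 S0start n (\<lambda>s. s = R0 k))"
abbreviation "Zn n \<equiv> card (KP d0 S0start n (\<lambda>s. s = Z0))"

lemma cs0:
  assumes "n \<ge> 1" "\<And>s. s \<noteq> S0start \<Longrightarrow> card {v. \<exists>s'. d0 s v = Some s' \<and> Phi s'} = (if Psi s then 1 else 0)"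
  shows "card (KP d0 S0start (Suc n) Phi) = card (KP d0 S0start n Psi)"
proof -
  have "card (KP d0 S0start (Suc n) Phi) = (\<Sum>i<(2::nat). (\<lambda>i. if i = 1 then 1 else 0) i
        * card (KP d0 S0start n (\<lambda>s. (if Psi s then 1 else 0) = i)))"
    by (rule count_step_gen[OF L0_fin[OF assms(1)] assms(1) d0_nos0 d0_fin]) (use assms(2) in auto)
  also have "\<dots> = card (KP d0 S0start n (\<lambda>s. (if Psi s then 1 else 0) = (1::nat)))"
    by (simp add: numeral_eq_Suc)
  also have "KP d0 S0start n (\<lambda>s. (if Psi s then 1 else 0) = (1::nat)) = KP d0 S0start n Psi"
    by (rule KP_cong) simp
  finally show ?thesis .
qed

lemma F1: "n \<ge> 1 \<Longrightarrow> Tn (Suc n) l = Qn n l"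
proof (rule cs0)
  fix s :: st0 assume "s \<noteq> S0start"
  show "card {v. \<exists>s'. d0 s v = Some s' \<and> s' = T0 l} = (if inQ l s then 1 else 0)"
  proof (cases s)
    case Z0
    then have "{v. \<exists>s'. d0 s v = Some s' \<and> s' = T0 l} = {}" by auto
    then show ?thesis using Z0 by (simp add: inQ_def)
  next
    case (R0 k)
    then have "{v. \<exists>s'. d0 s v = Some s' \<and> s' = T0 l} = (if l \<le> Suc k then {l} else {})" by auto
    then show ?thesis using R0 by (simp add: inQ_def)
  next
    case (T0 l')
    then have "{v. \<exists>s'. d0 s v = Some s' \<and> s' = T0 l} = (if l \<le> l' then {l} else {})" by auto
    then show ?thesis using T0 by (simp add: inQ_def)
  qed (use \<open>s \<noteq> S0start\<close> in simp)
qed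

lemma FZ: "n \<ge> 1 \<Longrightarrow> Zn (Suc n) = Zn n"
proof (rule cs0)
  fix s :: st0 assume "s \<noteq> S0start"
  have "{v. \<exists>s'. d0 s v = Some s' \<and> s' = Z0} = (if s = Z0 then {0} else {})"
    using \<open>s \<noteq> S0start\<close> by (cases s) auto
  then show "card {v. \<exists>s'. d0 s v = Some s' \<and> s' = Z0} = (if s = Z0 then 1 else 0)" by simp
qed

lemma FR0: "n \<ge> 1 \<Longrightarrow> Rn (Suc n) 0 = Zn n"
proof (rule cs0)
  fix s :: st0 assume "s \<noteq> S0start"
  have "{v. \<exists>s'. d0 s v = Some s' \<and> s' = R0 0} = (if s = Z0 then {1} else {})" by (cases s) auto
  then show "card {v. \<exists>s'. d0 s v = Some s' \<and> s' = R0 0} = (if s = Z0 then 1 else 0)" by simp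
qed

lemma FR: "n \<ge> 1 \<Longrightarrow> Rn (Suc n) (Suc k) = Rn n k"
proof (rule cs0)
  fix s :: st0 assume "s \<noteq> S0start"
  have "{v. \<exists>s'. d0 s v = Some s' \<and> s' = R0 (Suc k)} = (if s = R0 k then {Suc (Suc k)} else {})"
    by (cases s) auto
  then show "card {v. \<exists>s'. d0 s v = Some s' \<and> s' = R0 (Suc k)} = (if s = R0 k then 1 else 0)" by simp
qed

lemma start0: "\<And>v. d0 S0start v = (if v = 0 then Some Z0 else None)" by simp

lemma closedZR: "n \<ge> 1 \<Longrightarrow> Zn n = 1 \<and> (\<forall>k. Rn n k = (if Suc (Suc k) \<le> n then 1 else 0))"
proof (induction n rule: dec_induct)
  case base
  show ?case using KP_one[of d0 S0start Z0 "\<lambda>s. s = Z0", OF start0] KP_one[of d0 S0start Z0 "\<lambda>s. s = R0 _", OF start0] by simp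
next
  case (step n)
  have z: "Zn (Suc n) = 1" using FZ[OF step.hyps(1)] step.IH by simp
  have r: "Rn (Suc n) k = (if Suc (Suc k) \<le> Suc n then 1 else 0)" for k
  proof (cases k)
    case 0 then show ?thesis using FR0[OF step.hyps(1)] step.IH step.hyps(1) by simp
  next
    case (Suc k') then show ?thesis using FR[OF step.hyps(1), of k'] step.IH by simp
  qed
  show ?case using z r by blast
qed

lemma F2:
  assumes "n \<ge> 1"
  shows "Qn n (Suc j) = Qn n (Suc (Suc j)) + Tn n (Suc j) + Rn n j"
    "Qn n 0 = Qn n 1 + Tn n 0"
proof -
  note fin = L0_fin[OF assms]
  have e1: "KP d0 S0start n (inQ (Suc j)) =
      KP d0 S0start n (\<lambda>s. (inQ (Suc (Suc j)) s \<or> s = T0 (Suc j)) \<or> s = R0 j)"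
    by (rule KP_cong) (auto simp: inQ_def split: st0.splits)
  have "card (KP d0 S0start n (\<lambda>s. (inQ (Suc (Suc j)) s \<or> s = T0 (Suc j)) \<or> s = R0 j))
      = card (KP d0 S0start n (\<lambda>s. inQ (Suc (Suc j)) s \<or> s = T0 (Suc j))) + Rn n j"
    by (rule KP_union[OF fin]) (auto simp: inQ_def)
  also have "card (KP d0 S0start n (\<lambda>s. inQ (Suc (Suc j)) s \<or> s = T0 (Suc j)))
      = Qn n (Suc (Suc j)) + Tn n (Suc j)"
    by (rule KP_union[OF fin]) (auto simp: inQ_def)
  finally show "Qn n (Suc j) = Qn n (Suc (Suc j)) + Tn n (Suc j) + Rn n j" using e1 by simp
  have e0: "KP d0 S0start n (inQ 0) = KP d0 S0start n (\<lambda>s. inQ 1 s \<or> s = T0 0)"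
    by (rule KP_cong) (auto simp: inQ_def split: st0.splits)
  have "card (KP d0 S0start n (\<lambda>s. inQ 1 s \<or> s = T0 0)) = Qn n 1 + Tn n 0"
    by (rule KP_union[OF fin]) (auto simp: inQ_def)
  then show "Qn n 0 = Qn n 1 + Tn n 0" using e0 by simp
qed

lemma F4:
  assumes "n \<ge> 1" "n \<le> l"
  shows "Qn n l = 0"
proof -
  have "KP d0 S0start n (inQ l) = {}"
  proof (rule ccontr)
    assume "KP d0 S0start n (inQ l) \<noteq> {}"
    then obtain x s where x: "length x = n" "runst d0 S0start x = Some s" "inQ l s"
      by (auto simp: KP_def)
    have xn: "x \<noteq> []" using x(1) assms(1) by auto
    have I: "I0 s x" using C0_correct[OF xn] x(2) by blast
    have av: "AVP P0 x" using C0_correct[OF xn] x(2) by blast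
    have "last x \<in> set x" using xn by simp
    then have lb: "last x < n" using ascent_seq_bound[of x] av x(1) by (auto simp: AVP_def)
    show False
    proof (cases s)
      case (R0 k) then show False using I x(3) lb assms(2) by (auto simp: inQ_def)
    next
      case (T0 l') then show False using I x(3) lb assms(2) by (auto simp: inQ_def)
    qed (use x(3) in \<open>auto simp: inQ_def\<close>)
  qed
  then show ?thesis by simp
qed

lemma Qclosed: "n \<ge> 1 \<Longrightarrow> \<forall>l. 1 \<le> l \<longrightarrow> Qn n l + 1 = 2 ^ (n - l)"
proof (induction n rule: dec_induct)
  case base
  show ?case using F4[of 1] by simp
next
  case (step n)
  have n1: "Suc n \<ge> 1" by simp
  have "\<forall>l. Suc n - l = dd \<longrightarrow> 1 \<le> l \<longrightarrow> Qn (Suc n) l + 1 = 2 ^ (Suc n - l)" for dd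
  proof (induction dd)
    case 0
    show ?case using F4[OF n1] by simp
  next
    case (Suc dd)
    show ?case
    proof (intro allI impI)
      fix l assume l: "Suc n - l = Suc dd" "1 \<le> l"
      then obtain j where j: "l = Suc j" by (cases l) auto
      have ln: "l \<le> n" using l by simp
      have a: "Qn (Suc n) (Suc l) + 1 = 2 ^ (Suc n - Suc l)" using Suc.IH l by simp
      have b: "Tn (Suc n) l = Qn n l" using F1[OF step.hyps(1)] .
      have c: "Qn n l + 1 = 2 ^ (n - l)" using step.IH l(2) by simp
      have r: "Rn (Suc n) j = 1" using closedZR[OF n1] j ln by simp
      have e: "Qn (Suc n) l = Qn (Suc n) (Suc l) + Tn (Suc n) l + Rn (Suc n) j"
        using F2(1)[OF n1, of j] j by simp
      have p: "(2::nat) ^ (Suc n - l) = 2 * 2 ^ (n - l)" using ln by (simp add: Suc_diff_le)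
      have q: "Suc n - Suc l = n - l" by simp
      show "Qn (Suc n) l + 1 = 2 ^ (Suc n - l)" using a b c r e p q by simp
    qed
  qed
  then show ?case by blast
qed

lemma Q0closed: "n \<ge> 1 \<Longrightarrow> Qn n 0 + n + 1 = 2 ^ n"
proof (induction n rule: dec_induct)
  case base
  have "Qn 1 1 = 0" using F4[of 1 1] by simp
  moreover have "Tn 1 0 = 0" using KP_one[of d0 S0start Z0 "\<lambda>s. s = T0 0", OF start0] by simp
  ultimately show ?case using F2(2)[of 1] by simp
next
  case (step n)
  have n1: "Suc n \<ge> 1" by simp
  have a: "Qn (Suc n) 0 = Qn (Suc n) 1 + Tn (Suc n) 0" using F2(2)[OF n1] .
  have b: "Tn (Suc n) 0 = Qn n 0" using F1[OF step.hyps(1)] .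
  have c: "Qn (Suc n) 1 + 1 = 2 ^ n" using Qclosed[OF n1] by simp
  show ?case using a b c step.IH by simp
qed

theorem count0: "n \<ge> 1 \<Longrightarrow> a_count P0 n = 2 ^ n - n"
proof -
  assume n: "n \<ge> 1"
  have "a_count P0 n = card (Lset d0 S0start n)" using L0_eq[OF n] by (simp add: a_count_AVP)
  also have "Lset d0 S0start n = KP d0 S0start n (\<lambda>s. s = Z0 \<or> inQ 0 s)"
  proof (rule set_eqI)
    fix x
    show "x \<in> Lset d0 S0start n \<longleftrightarrow> x \<in> KP d0 S0start n (\<lambda>s. s = Z0 \<or> inQ 0 s)"
    proof
      assume "x \<in> Lset d0 S0start n"
      then obtain s where s: "length x = n" "runst d0 S0start x = Some s" by (auto simp: Lset_def)
      then have "x \<noteq> []" using n by auto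
      then have "s \<noteq> S0start" using runst_not_s0[OF d0_nos0 _ s(2)] by simp
      then have "s = Z0 \<or> inQ 0 s" by (cases s) (auto simp: inQ_def)
      then show "x \<in> KP d0 S0start n (\<lambda>s. s = Z0 \<or> inQ 0 s)" using s by (auto simp: KP_def)
    qed (auto simp: KP_def Lset_def)
  qed
  also have "card (KP d0 S0start n (\<lambda>s. s = Z0 \<or> inQ 0 s)) = Zn n + Qn n 0"
    by (rule KP_union[OF L0_fin[OF n]]) (auto simp: inQ_def)
  finally have "a_count P0 n = Zn n + Qn n 0" .
  then have "a_count P0 n + n = 2 ^ n" using closedZR[OF n] Q0closed[OF n] by simp
  then show ?thesis by simp
qed

theorem theorem4p3:
  fixes n :: nat
  assumes "n \<ge> 1"
  shows "a_count {[0,1,0,1], [0,1,0,2], [0,1,1,2]} n = 2 ^ n - n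
       \<and> a_count {[0,1,0,1], [0,1,0,2], [0,1,2,0]} n = 2 ^ n - n
       \<and> a_count {[0,1,0,1], [0,1,0,2], [0,1,2,1]} n = 2 ^ n - n
       \<and> a_count {[0,1,0,1], [0,1,1,2], [0,1,2,1]} n = 2 ^ n - n
       \<and> a_count {[0,1,0,1], [0,1,2,0], [0,1,2,1]} n = 2 ^ n - n
       \<and> a_count {[0,1,0,2], [0,1,2,0], [0,1,2,1]} n = 2 ^ n - n"
  using count0[OF assms] count1[OF assms] count2[OF assms] count3[OF assms]
    count4[OF assms] count5[OF assms] by simp

end
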